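(* Let $n\ge3$, $\delta>0$, and let $F\subset C^2([0,1]^{n-1})$ be a cinematic family (cinematic constant $K$, doubling constant $D$, modulus of continuity $\alpha$). Let $f,g\in F$ with $\|f-g\|_{C^2([0,1]^{n-1})}\in[\delta,1]$. Let $\epsilon>0$, $0<s\le1$, and let $E\subset[0,1]^{n-1}$ be a $(\delta,n-2+s,\delta^{-\epsilon})$-set with $|E|\le\delta^{-(n-2+s)}$. Let $P_{f,g}$ be the orthogonal projection of $f^\delta\cap g^\delta$ onto $[0,1]^{n-1}$ (the first $n-1$ coordinates). Then $$|E\cap P_{f,g}|_\delta\lesssim\delta^{-\epsilon}\frac{\delta^{-(n-2)}}{\|f-g\|^s_{C^2([0,1]^{n-1})}},$$ with implicit constant depending only on $n$ and the parameters of $F$.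
   Context: $|E|$ is cardinality and $|A|_\delta$ the $\delta$-covering number. A bounded set $P\subset\mathbb{R}^{n-1}$ is a $(\delta,\sigma,C)$-set if $|P\cap B(x,r)|_\delta\le Cr^\sigma|P|_\delta$ for all $x$ and $r\ge\delta$. For $f\in C^2([0,1]^{n-1})$, $f^\delta:=\{(x,y)\in[0,1]^{n-1}\times\mathbb{R}:|y-f(x)|\le\delta\}$. Cinematic family: for a domain $U\subset\mathbb{R}^k$, $F\subset C^2(U)$ is a cinematic family with cinematic constant $K$, doubling constant $D$ and modulus of continuity $\alpha$ if: (1) $F$ lies in a ball of diameter $K$ in $C^2(U)$; (2) $F$ is doubling with constant at most $D$; (3) for all $f,g\in F$ and $\xi\in S^{k-1}$, $\inf_{x\in U}\{|f-g|(x)+|\nabla f-\nabla g|(x)+|\nabla_\xi\nabla_\xi(f-g)(x)|\}\ge K^{-1}\|f-g\|_{C^2(U)}$, with $\nabla_\xi\nabla_\xi h=\langle\nabla^2h\,\xi,\xi\rangle$; (4) there is an increasing continuous $\alpha:[0,1]\to[0,\infty)$, $\alpha(0)=0$, $0<\alpha(s)\le K^{-1}s$ for $s\in(0,1]$, such that for all $f,g\in F$, $\xi\in S^{k-1}$, sufficiently small $\eta>0$ and $x,y\in U$ with $|x-y|\le\alpha(\eta)$: $|\nabla_\xi\nabla_\xi(f-g)(x)-\nabla_\xi\nabla_\xi(f-g)(y)|\le\eta$. *)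

theory Defs
  imports "HOL-Analysis.Analysis"
begin

text \<open>The domain [0,1]^(n-1), realised as real^'k with CARD('k) = n - 1.\<close>
definition unit_cube :: "(real^'k::finite) set" where
  "unit_cube = cbox 0 1"

definition grad :: "(real^'k::finite) set \<Rightarrow> (real^'k \<Rightarrow> real) \<Rightarrow> real^'k \<Rightarrow> real^'k" where
  "grad U f x = (SOME v. (f has_derivative (\<lambda>h. v \<bullet> h)) (at x within U))"

definition hess :: "(real^'k::finite) set \<Rightarrow> (real^'k \<Rightarrow> real) \<Rightarrow> real^'k \<Rightarrow> real^'k^'k" where
  "hess U f x = (SOME M. (grad U f has_derivative (\<lambda>h. M *v h)) (at x within U))"

definition C2_on :: "(real^'k::finite) set \<Rightarrow> (real^'k \<Rightarrow> real) \<Rightarrow> bool" where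
  "C2_on U f \<longleftrightarrow>
     (\<forall>x\<in>U. (f has_derivative (\<lambda>h. grad U f x \<bullet> h)) (at x within U)
           \<and> (grad U f has_derivative (\<lambda>h. hess U f x *v h)) (at x within U))
     \<and> continuous_on U (hess U f)"

definition C2_norm :: "(real^'k::finite) set \<Rightarrow> (real^'k \<Rightarrow> real) \<Rightarrow> real" where
  "C2_norm U h = (SUP x\<in>U. \<bar>h x\<bar>) + (SUP x\<in>U. norm (grad U h x))
                 + (SUP x\<in>U. onorm (\<lambda>v. hess U h x *v v))"

definition dd2 :: "(real^'k::finite) set \<Rightarrow> (real^'k \<Rightarrow> real) \<Rightarrow> real^'k \<Rightarrow> real^'k \<Rightarrow> real" where
  "dd2 U h \<xi> x = (hess U h x *v \<xi>) \<bullet> \<xi>"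

definition doubling_with :: "(real^'k::finite) set \<Rightarrow> (real^'k \<Rightarrow> real) set \<Rightarrow> real \<Rightarrow> bool" where
  "doubling_with U F D \<longleftrightarrow>
     (\<forall>f\<in>F. \<forall>r>0. \<exists>G. finite G \<and> G \<subseteq> F \<and> real (card G) \<le> D \<and>
        {g\<in>F. C2_norm U (\<lambda>x. g x - f x) < r}
          \<subseteq> (\<Union>c\<in>G. {g\<in>F. C2_norm U (\<lambda>x. g x - c x) < r / 2}))"

text \<open>Cinematic family on U with cinematic constant K, doubling constant D,
  modulus of continuity \<alpha>; \<eta>0 quantifies "sufficiently small \<eta>".\<close>
definition cinematic :: "(real^'k::finite) set \<Rightarrow> (real^'k \<Rightarrow> real) set \<Rightarrow> real \<Rightarrow> real
    \<Rightarrow> (real \<Rightarrow> real) \<Rightarrow> real \<Rightarrow> bool" where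
  "cinematic U F K D \<alpha> \<eta>0 \<longleftrightarrow>
     K > 0 \<and> (\<forall>f\<in>F. C2_on U f) \<and>
     \<comment> \<open>(1) F lies in a ball of diameter K in C^2(U)\<close>
     (\<exists>f0. C2_on U f0 \<and> (\<forall>f\<in>F. C2_norm U (\<lambda>x. f x - f0 x) < K / 2)) \<and>
     \<comment> \<open>(2) doubling\<close>
     doubling_with U F D \<and>
     \<comment> \<open>(3) non-degeneracy\<close>
     (\<forall>f\<in>F. \<forall>g\<in>F. \<forall>\<xi>. norm \<xi> = 1 \<longrightarrow>
        (INF x\<in>U. \<bar>f x - g x\<bar> + norm (grad U f x - grad U g x)
                    + \<bar>dd2 U (\<lambda>y. f y - g y) \<xi> x\<bar>)
          \<ge> C2_norm U (\<lambda>x. f x - g x) / K) \<and>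
     \<comment> \<open>(4) modulus of continuity\<close>
     mono_on {0..1} \<alpha> \<and> continuous_on {0..1} \<alpha> \<and> \<alpha> 0 = 0 \<and>
     (\<forall>s\<in>{0<..1}. 0 < \<alpha> s \<and> \<alpha> s \<le> s / K) \<and> \<eta>0 > 0 \<and>
     (\<forall>f\<in>F. \<forall>g\<in>F. \<forall>\<xi>. norm \<xi> = 1 \<longrightarrow> (\<forall>\<eta>. 0 < \<eta> \<and> \<eta> \<le> \<eta>0 \<longrightarrow>
        (\<forall>x\<in>U. \<forall>y\<in>U. dist x y \<le> \<alpha> \<eta> \<longrightarrow>
           \<bar>dd2 U (\<lambda>z. f z - g z) \<xi> x - dd2 U (\<lambda>z. f z - g z) \<xi> y\<bar> \<le> \<eta>)))"

definition cov_num :: "real \<Rightarrow> ('a::metric_space) set \<Rightarrow> nat" where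
  "cov_num \<delta> A = (LEAST N. \<exists>G. finite G \<and> card G = N \<and> A \<subseteq> (\<Union>c\<in>G. cball c \<delta>))"

definition delta_sigma_set :: "real \<Rightarrow> real \<Rightarrow> real \<Rightarrow> ('a::metric_space) set \<Rightarrow> bool" where
  "delta_sigma_set \<delta> \<sigma> C P \<longleftrightarrow> bounded P \<and>
     (\<forall>x. \<forall>r\<ge>\<delta>. real (cov_num \<delta> (P \<inter> ball x r)) \<le> C * r powr \<sigma> * real (cov_num \<delta> P))"

definition fnbhd :: "real \<Rightarrow> (real^'k::finite \<Rightarrow> real) \<Rightarrow> ((real^'k) \<times> real) set" where
  "fnbhd \<delta> f = {(x, y). x \<in> unit_cube \<and> \<bar>y - f x\<bar> \<le> \<delta>}"

end

theory Submission
  imports Defs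
begin

lemma measure_cbox_cart:
  fixes a b :: "real^'k"
  assumes "\<And>i. a$i \<le> b$i"
  shows "measure lebesgue (cbox a b) = (\<Prod>i\<in>UNIV. b$i - a$i)"
proof -
  have ne: "cbox a b \<noteq> {}" proof -
    have "a \<in> cbox a b" using assms by (simp add: mem_box_cart)
    then show ?thesis by blast
  qed
  have "measure lebesgue (cbox a b) = measure lborel (cbox a b)"
    by simp
  also have "\<dots> = (\<Prod>i\<in>UNIV. b$i - a$i)" using content_cbox_cart[OF ne] .
  finally show ?thesis .
qed

lemma measure_cube_cart:
  fixes a :: "real^'k"
  assumes "l \<ge> 0"
  shows "measure lebesgue (cbox a (a + l *\<^sub>R 1)) = l ^ CARD('k)"
  using measure_cbox_cart[of a "a + l *\<^sub>R 1"] assms by simp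

lemma cball_sub_cbox:
  fixes c :: "real^'k"
  shows "cball c r \<subseteq> cbox (c - r *\<^sub>R 1) (c - r *\<^sub>R 1 + (2*r) *\<^sub>R 1)"
proof
  fix x assume "x \<in> cball c r"
  then have "norm (x - c) \<le> r" by (simp add: dist_norm norm_minus_commute)
  then have cc: "\<bar>(x - c)$i\<bar> \<le> r" for i using component_le_norm_cart[of "x-c" i] by linarith
  show "x \<in> cbox (c - r *\<^sub>R 1) (c - r *\<^sub>R 1 + (2*r) *\<^sub>R 1)"
    unfolding mem_box_cart
  proof (intro allI conjI)
    fix i
    show "(c - r *\<^sub>R 1) $ i \<le> x $ i" using cc[of i] by (simp add: abs_le_iff)
    show "x $ i \<le> (c - r *\<^sub>R 1 + (2 * r) *\<^sub>R 1) $ i" using cc[of i] by (simp add: abs_le_iff)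
  qed
qed

lemma measure_cball_le:
  fixes c :: "real^'k"
  assumes "r \<ge> 0"
  shows "measure lebesgue (cball c r) \<le> (2*r) ^ CARD('k)"
proof -
  have "measure lebesgue (cball c r) \<le> measure lebesgue (cbox (c - r *\<^sub>R 1) (c - r *\<^sub>R 1 + (2*r) *\<^sub>R 1))"
    by (rule measure_mono_fmeasurable) (use cball_sub_cbox in auto)
  also have "\<dots> = (2*r) ^ CARD('k)" using measure_cube_cart[of "2*r" "c - r *\<^sub>R 1"] assms by simp
  finally show ?thesis .
qed

lemma seg_in:
  assumes "convex S" "x \<in> S" "y \<in> S" "s \<in> {0..1::real}"
  shows "x + s *\<^sub>R (y - x) \<in> S"
proof -
  have "x + s *\<^sub>R (y - x) = (1 - s) *\<^sub>R x + s *\<^sub>R y" by (simp add: algebra_simps)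
  then show ?thesis using assms by (auto intro: convexD_alt)
qed

lemma seg_hasderiv:
  fixes h :: "'a::real_normed_vector \<Rightarrow> 'b::real_normed_vector"
  assumes "convex S" "x \<in> S" "y \<in> S"
    and der: "\<And>z. z \<in> S \<Longrightarrow> (h has_derivative Dl z) (at z within S)"
    and s: "s \<in> {0..1}"
  shows "((\<lambda>s. h (x + s *\<^sub>R (y - x))) has_derivative (\<lambda>d. Dl (x + s *\<^sub>R (y - x)) (d *\<^sub>R (y - x)))) (at s within {0..1})"
proof (rule has_derivative_in_compose2[where g=h and t=S])
  show "z \<in> S \<Longrightarrow> (h has_derivative Dl z) (at z within S)" for z using der by blast
  show "(\<lambda>s. x + s *\<^sub>R (y - x)) ` {0..1} \<subseteq> S" using seg_in[OF assms(1-3)] by auto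
  show "s \<in> {0..1}" by fact
  show "((\<lambda>s. x + s *\<^sub>R (y - x)) has_derivative (\<lambda>d. d *\<^sub>R (y - x))) (at s within {0..1})"
    by (auto intro!: derivative_eq_intros)
qed

lemma seg_cont:
  fixes h :: "'a::real_normed_vector \<Rightarrow> 'b::real_normed_vector"
  assumes "convex S" "x \<in> S" "y \<in> S"
    and der: "\<And>z. z \<in> S \<Longrightarrow> (h has_derivative Dl z) (at z within S)"
  shows "continuous_on {0..1} (\<lambda>s. h (x + s *\<^sub>R (y - x)))"
  by (rule has_derivative_continuous_on, rule seg_hasderiv[OF assms])

lemma seg_real_deriv:
  fixes h :: "real^'k \<Rightarrow> real"
  assumes "convex S" "x \<in> S" "y \<in> S"
    and der: "\<And>z. z \<in> S \<Longrightarrow> (h has_derivative (\<lambda>v. D z \<bullet> v)) (at z within S)"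
    and s: "0 < s" "s < 1"
  shows "((\<lambda>s. h (x + s *\<^sub>R (y - x))) has_real_derivative (D (x + s *\<^sub>R (y - x)) \<bullet> (y - x))) (at s)"
proof -
  have "((\<lambda>s. h (x + s *\<^sub>R (y - x))) has_derivative (\<lambda>d. D (x + s *\<^sub>R (y - x)) \<bullet> (d *\<^sub>R (y - x)))) (at s within {0..1})"
    using seg_hasderiv[OF assms(1-3), where Dl="\<lambda>z v. D z \<bullet> v"] der s by auto
  then have "((\<lambda>s. h (x + s *\<^sub>R (y - x))) has_derivative (\<lambda>d. D (x + s *\<^sub>R (y - x)) \<bullet> (d *\<^sub>R (y - x)))) (at s)"
    using at_within_Icc_at[of 0 s 1] s by simp
  moreover have "(\<lambda>d. D (x + s *\<^sub>R (y - x)) \<bullet> (d *\<^sub>R (y - x))) = (*) (D (x + s *\<^sub>R (y - x)) \<bullet> (y - x))"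
    by (auto simp: fun_eq_iff)
  ultimately show ?thesis unfolding has_field_derivative_def by simp
qed

lemma seg_real_deriv2:
  fixes D :: "real^'k \<Rightarrow> real^'k"
  assumes "convex S" "x \<in> S" "y \<in> S"
    and der: "\<And>z. z \<in> S \<Longrightarrow> (D has_derivative (\<lambda>v. H z *v v)) (at z within S)"
    and s: "0 < s" "s < 1"
  shows "((\<lambda>s. D (x + s *\<^sub>R (y - x)) \<bullet> (y - x)) has_real_derivative ((H (x + s *\<^sub>R (y - x)) *v (y - x)) \<bullet> (y - x))) (at s)"
proof -
  have "((\<lambda>s. D (x + s *\<^sub>R (y - x))) has_derivative (\<lambda>d. H (x + s *\<^sub>R (y - x)) *v (d *\<^sub>R (y - x)))) (at s within {0..1})"
    using seg_hasderiv[OF assms(1-3), where Dl="\<lambda>z v. H z *v v"] der s by auto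
  then have "((\<lambda>s. D (x + s *\<^sub>R (y - x))) has_derivative (\<lambda>d. H (x + s *\<^sub>R (y - x)) *v (d *\<^sub>R (y - x)))) (at s)"
    using at_within_Icc_at[of 0 s 1] s by simp
  then have "((\<lambda>s. D (x + s *\<^sub>R (y - x)) \<bullet> (y - x)) has_derivative (\<lambda>d. (H (x + s *\<^sub>R (y - x)) *v (d *\<^sub>R (y - x))) \<bullet> (y - x))) (at s)"
    by (rule has_derivative_inner_left)
  moreover have "(\<lambda>d. (H (x + s *\<^sub>R (y - x)) *v (d *\<^sub>R (y - x))) \<bullet> (y - x)) = (*) ((H (x + s *\<^sub>R (y - x)) *v (y - x)) \<bullet> (y - x))"
    by (auto simp: fun_eq_iff matrix_vector_mult_scaleR)
  ultimately show ?thesis unfolding has_field_derivative_def by simp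
qed

lemma mvt_open:
  fixes f f' :: "real \<Rightarrow> real"
  assumes "a < b" "continuous_on {a..b} f"
    and d: "\<And>s. a < s \<Longrightarrow> s < b \<Longrightarrow> (f has_real_derivative f' s) (at s)"
  shows "\<exists>z. a < z \<and> z < b \<and> f b - f a = (b - a) * f' z"
proof -
  obtain l z where z: "a < z" "z < b" "DERIV f z :> l" "f b - f a = (b - a) * l"
    using MVT[OF assms(1,2)] d by (meson real_differentiable_def)
  have "l = f' z" using DERIV_unique[OF z(3) d[OF z(1,2)]] .
  then show ?thesis using z by blast
qed

lemma strong_cvx_1d:
  fixes \<phi> \<phi>' \<phi>'' :: "real \<Rightarrow> real"
  assumes cont: "continuous_on {0..1} \<phi>"
    and d1: "\<And>s. 0 < s \<Longrightarrow> s < 1 \<Longrightarrow> (\<phi> has_real_derivative \<phi>' s) (at s)"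
    and d2: "\<And>s. 0 < s \<Longrightarrow> s < 1 \<Longrightarrow> (\<phi>' has_real_derivative \<phi>'' s) (at s)"
    and c: "\<And>s. 0 < s \<Longrightarrow> s < 1 \<Longrightarrow> \<phi>'' s \<ge> c"
    and t: "0 \<le> t" "t \<le> 1"
  shows "\<phi> t \<le> (1 - t) * \<phi> 0 + t * \<phi> 1 - c / 2 * t * (1 - t)"
proof (cases "t = 0 \<or> t = 1")
  case True then show ?thesis by auto
next
  case False
  then have t': "0 < t" "t < 1" using t by auto
  define \<psi> where "\<psi> s = \<phi> s - c / 2 * s\<^sup>2" for s
  define g where "g s = \<phi>' s - c * s" for s
  have dpsi: "(\<psi> has_real_derivative g s) (at s)" if "0 < s" "s < 1" for s
    unfolding \<psi>_def g_def using d1[OF that]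
    by (auto intro!: derivative_eq_intros simp: power2_eq_square)
  have dg: "(g has_real_derivative (\<phi>'' s - c)) (at s)" if "0 < s" "s < 1" for s
    unfolding g_def using d2[OF that] by (auto intro!: derivative_eq_intros)
  have cpsi: "continuous_on {0..1} \<psi>" unfolding \<psi>_def
    by (intro continuous_intros cont)
  obtain z1 where z1: "0 < z1" "z1 < t" "\<psi> t - \<psi> 0 = (t - 0) * g z1"
    using mvt_open[of 0 t \<psi> g] t' dpsi continuous_on_subset[OF cpsi] by force
  obtain z2 where z2: "t < z2" "z2 < 1" "\<psi> 1 - \<psi> t = (1 - t) * g z2"
    using mvt_open[of t 1 \<psi> g] t' dpsi continuous_on_subset[OF cpsi] by force
  have "g z1 \<le> g z2"
  proof (rule DERIV_nonneg_imp_increasing_open[of z1 z2 g])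
    show "z1 \<le> z2" using z1 z2 by simp
    show "\<exists>y. DERIV g x :> y \<and> 0 \<le> y" if "z1 < x" "x < z2" for x
      using dg[of x] c[of x] that z1 z2 by force
    show "continuous_on {z1..z2} g"
    proof (rule DERIV_continuous_on[where D="\<lambda>s. \<phi>'' s - c"])
      fix x assume "x \<in> {z1..z2}"
      then have "0 < x" "x < 1" using z1 z2 by auto
      then show "(g has_real_derivative \<phi>'' x - c) (at x within {z1..z2})"
        using dg has_field_derivative_at_within by blast
    qed
  qed
  then have "(1 - t) * (\<psi> t - \<psi> 0) \<le> t * (\<psi> 1 - \<psi> t)"
    using z1 z2 t' by (simp add: mult_left_mono mult.assoc[symmetric] mult.commute[of "1-t"])
  then have "\<psi> t \<le> (1 - t) * \<psi> 0 + t * \<psi> 1" by (simp add: algebra_simps)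
  then show ?thesis unfolding \<psi>_def by (simp add: algebra_simps power2_eq_square add_divide_distrib diff_divide_distrib)
qed

lemma measure_two_balls:
  fixes c z :: "real^'k"
  assumes "CARD('k) \<ge> 2" "\<rho> \<ge> 0" "R \<ge> 0"
  shows "measure lebesgue (cball c \<rho> \<inter> cball z R) \<le> 4 * \<rho>\<^sup>2 * (2*R) ^ (CARD('k) - 2)"
proof -
  define m where "m = CARD('k)"
  have m: "m = (m - 2) + 2" using assms(1) m_def by simp
  show ?thesis
  proof (cases "\<rho> \<le> R")
    case True
    have "measure lebesgue (cball c \<rho> \<inter> cball z R) \<le> measure lebesgue (cball c \<rho>)"
      by (rule measure_mono_fmeasurable) auto
    also have "\<dots> \<le> (2*\<rho>) ^ m" using measure_cball_le assms m_def by blast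
    also have "\<dots> = (2*\<rho>)\<^sup>2 * (2*\<rho>) ^ (m - 2)" by (subst m) (simp add: power_add power2_eq_square)
    also have "\<dots> \<le> (2*\<rho>)\<^sup>2 * (2*R) ^ (m - 2)"
      using True assms by (intro mult_left_mono power_mono) auto
    finally show ?thesis by (simp add: m_def power_mult_distrib)
  next
    case False
    have "measure lebesgue (cball c \<rho> \<inter> cball z R) \<le> measure lebesgue (cball z R)"
      by (rule measure_mono_fmeasurable) auto
    also have "\<dots> \<le> (2*R) ^ m" using measure_cball_le assms m_def by blast
    also have "\<dots> = (2*R)\<^sup>2 * (2*R) ^ (m - 2)" by (subst m) (simp add: power_add power2_eq_square)
    also have "\<dots> \<le> (2*\<rho>)\<^sup>2 * (2*R) ^ (m - 2)"
      using False assms by (intro mult_right_mono power_mono) auto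
    finally show ?thesis by (simp add: m_def power_mult_distrib)
  qed
qed

lemma pow_sub_one_le:
  fixes k :: real
  assumes "k \<ge> 1"
  shows "k ^ n - 1 \<le> n * k ^ n * (k - 1)"
proof (induction n)
  case 0 then show ?case by simp
next
  case (Suc n)
  have k0: "k ^ n \<ge> 1" "k ^ Suc n \<ge> 1" by (rule one_le_power[OF assms])+
  have "k ^ Suc n - 1 = k * (k ^ n - 1) + (k - 1)" by (simp add: algebra_simps)
  also have "\<dots> \<le> k * (n * k ^ n * (k - 1)) + k ^ Suc n * (k - 1)"
  proof (rule add_mono)
    show "k * (k ^ n - 1) \<le> k * (n * k ^ n * (k - 1))" using Suc assms by (intro mult_left_mono) auto
    show "k - 1 \<le> k ^ Suc n * (k - 1)" using mult_right_mono[OF k0(2), of "k-1"] assms by simp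
  qed
  also have "\<dots> = Suc n * k ^ Suc n * (k - 1)" by (simp add: algebra_simps)
  finally show ?case .
qed

lemma closed_sublevel_compact:
  fixes h :: "real^'k \<Rightarrow> real"
  assumes "compact G" "continuous_on G h"
  shows "compact {y \<in> G. h y \<le> u}" "compact {y \<in> G. \<bar>h y\<bar> \<le> u}"
proof -
  have e1: "{y \<in> G. h y \<le> u} = G \<inter> h -` {..u}" by auto
  have "closed (G \<inter> h -` {..u})"
    by (rule continuous_closed_preimage[OF assms(2) compact_imp_closed[OF assms(1)]]) simp
  moreover have "bounded (G \<inter> h -` {..u})"
    using compact_imp_bounded[OF assms(1)] bounded_subset by blast
  ultimately show "compact {y \<in> G. h y \<le> u}" unfolding e1 by (simp add: compact_eq_bounded_closed)
  have e2: "{y \<in> G. \<bar>h y\<bar> \<le> u} = G \<inter> h -` {-u..u}" by auto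
  have "closed (G \<inter> h -` {-u..u})"
    by (rule continuous_closed_preimage[OF assms(2) compact_imp_closed[OF assms(1)]]) simp
  moreover have "bounded (G \<inter> h -` {-u..u})"
    using compact_imp_bounded[OF assms(1)] bounded_subset by blast
  ultimately show "compact {y \<in> G. \<bar>h y\<bar> \<le> u}" unfolding e2 by (simp add: compact_eq_bounded_closed)
qed

lemma quad_growth:
  fixes h :: "real^'k \<Rightarrow> real"
  assumes cvx: "convex G" and xs: "xs \<in> G" and y: "y \<in> G"
    and mn: "\<And>y. y \<in> G \<Longrightarrow> h xs \<le> h y"
    and sc: "\<And>x y \<tau>. x \<in> G \<Longrightarrow> y \<in> G \<Longrightarrow> 0 \<le> \<tau> \<Longrightarrow> \<tau> \<le> 1 \<Longrightarrow>
        h ((1 - \<tau>) *\<^sub>R x + \<tau> *\<^sub>R y) \<le> (1 - \<tau>) * h x + \<tau> * h y - a / 2 * \<tau> * (1 - \<tau>) * (norm (x - y))\<^sup>2"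
  shows "h y \<ge> h xs + a / 2 * (norm (y - xs))\<^sup>2"
proof -
  have "z * (a / 2 * (norm (y - xs))\<^sup>2) \<le> h y - h xs" if z: "0 < z" "z < 1" for z
  proof -
    define \<tau> where "\<tau> = 1 - z"
    have t: "0 < \<tau>" "\<tau> < 1" using z \<tau>_def by auto
    have "(1 - \<tau>) *\<^sub>R xs + \<tau> *\<^sub>R y \<in> G" using cvx xs y t by (auto intro: convexD_alt)
    then have "h xs \<le> h ((1 - \<tau>) *\<^sub>R xs + \<tau> *\<^sub>R y)" by (rule mn)
    also have "\<dots> \<le> (1 - \<tau>) * h xs + \<tau> * h y - a / 2 * \<tau> * (1 - \<tau>) * (norm (xs - y))\<^sup>2"
      using sc[OF xs y] t by auto
    finally have "\<tau> * (a / 2 * (1 - \<tau>) * (norm (xs - y))\<^sup>2) \<le> \<tau> * (h y - h xs)"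
      by (simp add: algebra_simps)
    then have "a / 2 * (1 - \<tau>) * (norm (xs - y))\<^sup>2 \<le> h y - h xs"
      using t by simp
    then show ?thesis using \<tau>_def by (simp add: norm_minus_commute algebra_simps)
  qed
  then have "a / 2 * (norm (y - xs))\<^sup>2 \<le> h y - h xs" by (rule field_le_mult_one_interval)
  then show ?thesis by simp
qed

lemma shell:
  fixes h :: "real^'k \<Rightarrow> real"
  assumes m2: "CARD('k) \<ge> 2"
    and G: "compact G" "convex G" "G \<noteq> {}" "G \<subseteq> cball z R"
    and hc: "continuous_on G h"
    and a: "a > 0" and t: "t > 0"
    and sc: "\<And>x y \<tau>. x \<in> G \<Longrightarrow> y \<in> G \<Longrightarrow> 0 \<le> \<tau> \<Longrightarrow> \<tau> \<le> 1 \<Longrightarrow>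
        h ((1 - \<tau>) *\<^sub>R x + \<tau> *\<^sub>R y) \<le> (1 - \<tau>) * h x + \<tau> * h y - a / 2 * \<tau> * (1 - \<tau>) * (norm (x - y))\<^sup>2"
  shows "measure lebesgue {y \<in> G. \<bar>h y\<bar> \<le> t}
           \<le> (48 * CARD('k) * 3 ^ CARD('k) + 40) * (t / a) * (2*R) ^ (CARD('k) - 2)"
proof -
  define m where "m = CARD('k)"
  define P where "P = (2*R) ^ (m - 2)"
  define A where "A = {y \<in> G. \<bar>h y\<bar> \<le> t}"
  have R0: "R \<ge> 0" using G(3,4) by auto
  have P0: "P \<ge> 0" unfolding P_def using R0 by simp
  obtain xs where xs: "xs \<in> G" "\<And>y. y \<in> G \<Longrightarrow> h xs \<le> h y"
    using continuous_attains_inf[OF G(1) G(3) hc] by blast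
  have qg: "h y \<ge> h xs + a / 2 * (norm (y - xs))\<^sup>2" if "y \<in> G" for y
    using quad_growth[OF G(2) xs(1) that xs(2) sc] by blast
  have Acomp: "compact A" unfolding A_def by (rule closed_sublevel_compact(2)[OF G(1) hc])
  define D0 where "D0 = - h xs"
  have main: "measure lebesgue A \<le> 48 * m * 3 ^ m * (t / a) * P \<or> measure lebesgue A \<le> 40 * (t / a) * P"
  proof (cases "D0 \<ge> 4 * t")
    case True
    define \<kappa> where "\<kappa> = (D0 + t) / (D0 - 2 * t)"
    have D0p: "D0 - 2 * t > 0" "D0 > 0" using True t by auto
    have k1: "\<kappa> \<ge> 1" unfolding \<kappa>_def using D0p t by (simp add: field_simps)
    have k3: "\<kappa> \<le> 3" unfolding \<kappa>_def using D0p t True by (simp add: field_simps)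
    have km1: "\<kappa> - 1 \<le> 6 * t / D0" unfolding \<kappa>_def using D0p t True by (simp add: field_simps)
    define S1 where "S1 = {y \<in> G. h y \<le> t}"
    define S2 where "S2 = {y \<in> G. h y \<le> - 2 * t}"
    have S1c: "compact S1" unfolding S1_def by (rule closed_sublevel_compact(1)[OF G(1) hc])
    have S2c: "compact S2" unfolding S2_def by (rule closed_sublevel_compact(1)[OF G(1) hc])
    have S21: "S2 \<subseteq> S1" unfolding S1_def S2_def using t by auto
    define T where "T y = \<kappa> *\<^sub>R y + (1 - \<kappa>) *\<^sub>R xs" for y
    have S1T: "S1 \<subseteq> T ` S2"
    proof
      fix y assume y: "y \<in> S1"
      define y' where "y' = (1 - 1/\<kappa>) *\<^sub>R xs + (1/\<kappa>) *\<^sub>R y"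
      have ik: "0 \<le> 1/\<kappa>" "1/\<kappa> \<le> 1" using k1 by auto
      have yG: "y \<in> G" using y S1_def by auto
      have y'G: "y' \<in> G" unfolding y'_def using G(2) xs(1) yG ik by (auto intro: convexD_alt)
      have "h y' \<le> (1 - 1/\<kappa>) * h xs + (1/\<kappa>) * h y - a / 2 * (1/\<kappa>) * (1 - 1/\<kappa>) * (norm (xs - y))\<^sup>2"
        unfolding y'_def by (rule sc[OF xs(1) yG ik])
      also have "\<dots> \<le> (1 - 1/\<kappa>) * h xs + (1/\<kappa>) * h y"
        using a ik by (simp add: mult_nonneg_nonneg)
      also have "\<dots> \<le> (1 - 1/\<kappa>) * (- D0) + (1/\<kappa>) * t"
        using y ik unfolding S1_def D0_def by (intro add_mono mult_left_mono) auto
      also have "\<dots> = - 2 * t"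
      proof -
        have "D0 + t > 0" using D0p t by simp
        then have e: "(1/\<kappa>) * (D0 + t) = D0 - 2 * t" unfolding \<kappa>_def by simp
        have "(1 - 1/\<kappa>) * (- D0) + (1/\<kappa>) * t = - D0 + (1/\<kappa>) * (D0 + t)"
          by (simp add: algebra_simps add_divide_distrib)
        then show ?thesis using e by linarith
      qed
      finally have "y' \<in> S2" unfolding S2_def using y'G by auto
      moreover have "T y' = y" unfolding T_def y'_def using k1
        by (simp add: algebra_simps)
      ultimately show "y \<in> T ` S2" by (metis image_eqI)
    qed
    have TS2c: "compact (T ` S2)" unfolding T_def
      by (intro compact_continuous_image S2c continuous_intros)
    have muT: "measure lebesgue (T ` S2) = \<kappa> ^ m * measure lebesgue S2"
      using measure_lebesgue_affine[of \<kappa> "(1 - \<kappa>) *\<^sub>R xs" S2] k1 unfolding T_def m_def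
      by simp
    have AS: "A \<subseteq> S1 - S2" unfolding A_def S1_def S2_def using t by auto
    have "measure lebesgue A \<le> measure lebesgue (S1 - S2)"
      using AS S1c S2c Acomp by (intro measure_mono_fmeasurable) (auto intro: lmeasurable_compact fmeasurableD)
    also have "\<dots> = measure lebesgue S1 - measure lebesgue S2"
    proof (rule measure_Diff)
      have "S1 \<in> lmeasurable" by (rule lmeasurable_compact[OF S1c])
      then show "emeasure lebesgue S1 \<noteq> \<infinity>" "S1 \<in> sets lebesgue" by (auto simp: fmeasurable_def)
      show "S2 \<in> sets lebesgue" using lmeasurable_compact[OF S2c] by (auto simp: fmeasurable_def)
      show "S2 \<subseteq> S1" by (rule S21)
    qed
    also have "\<dots> \<le> \<kappa> ^ m * measure lebesgue S2 - measure lebesgue S2"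
      using S1T S1c TS2c muT by (metis diff_right_mono lmeasurable_compact fmeasurableD measure_mono_fmeasurable)
    also have "\<dots> = (\<kappa> ^ m - 1) * measure lebesgue S2" by (simp add: algebra_simps)
    also have "\<dots> \<le> (m * \<kappa> ^ m * (\<kappa> - 1)) * measure lebesgue S2"
      by (intro mult_right_mono pow_sub_one_le k1) auto
    also have "\<dots> \<le> (m * 3 ^ m * (6 * t / D0)) * measure lebesgue S2"
    proof -
      have "\<kappa> ^ m \<le> (3::real) ^ m" using k1 k3 by (intro power_mono) auto
      then have "real m * \<kappa> ^ m \<le> real m * (3::real) ^ m" by (intro mult_left_mono) auto
      then have "(real m * \<kappa> ^ m) * (\<kappa> - 1) \<le> (real m * (3::real) ^ m) * (6 * t / D0)"
        using k1 by (intro mult_mono[OF _ km1]) auto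
      then show ?thesis by (intro mult_right_mono) auto
    qed
    also have "\<dots> \<le> (m * 3 ^ m * (6 * t / D0)) * (8 * D0 / a * P)"
    proof (rule mult_left_mono)
      define \<rho>1 where "\<rho>1 = sqrt (2 * D0 / a)"
      have "S2 \<subseteq> cball xs \<rho>1 \<inter> cball z R"
      proof
        fix y assume y: "y \<in> S2"
        then have yG: "y \<in> G" unfolding S2_def by auto
        have "h xs + a / 2 * (norm (y - xs))\<^sup>2 \<le> - 2 * t" using qg[OF yG] y unfolding S2_def by auto
        then have "(norm (y - xs))\<^sup>2 \<le> 2 * D0 / a" unfolding D0_def using a t
          by (simp add: field_simps)
        then have "norm (y - xs) \<le> \<rho>1" unfolding \<rho>1_def by (simp add: real_le_rsqrt)
        then show "y \<in> cball xs \<rho>1 \<inter> cball z R" using G(4) yG by (auto simp: dist_norm norm_minus_commute)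
      qed
      then have "measure lebesgue S2 \<le> measure lebesgue (cball xs \<rho>1 \<inter> cball z R)"
        using lmeasurable_compact[OF S2c] by (intro measure_mono_fmeasurable) (auto intro: fmeasurableD)
      also have "\<dots> \<le> 4 * \<rho>1\<^sup>2 * P" unfolding P_def m_def
        by (rule measure_two_balls[OF m2 _ R0]) (insert D0p a, simp add: \<rho>1_def)
      also have "\<dots> = 8 * D0 / a * P" unfolding \<rho>1_def using D0p a by simp
      finally show "measure lebesgue S2 \<le> 8 * D0 / a * P" .
      show "0 \<le> m * 3 ^ m * (6 * t / D0)" using t D0p by simp
    qed
    also have "\<dots> = 48 * m * 3 ^ m * (t / a) * P" using D0p a by (simp add: field_simps)
    finally show ?thesis by blast
  next
    case False
    define \<rho>2 where "\<rho>2 = sqrt (10 * t / a)"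
    have "A \<subseteq> cball xs \<rho>2 \<inter> cball z R"
    proof
      fix y assume y: "y \<in> A"
      then have yG: "y \<in> G" unfolding A_def by auto
      have "h xs + a / 2 * (norm (y - xs))\<^sup>2 \<le> t" using qg[OF yG] y unfolding A_def by auto
      then have "(norm (y - xs))\<^sup>2 \<le> 10 * t / a" unfolding D0_def using a t False D0_def
        by (simp add: field_simps)
      then have "norm (y - xs) \<le> \<rho>2" unfolding \<rho>2_def by (simp add: real_le_rsqrt)
      then show "y \<in> cball xs \<rho>2 \<inter> cball z R" using G(4) yG by (auto simp: dist_norm norm_minus_commute)
    qed
    then have "measure lebesgue A \<le> measure lebesgue (cball xs \<rho>2 \<inter> cball z R)"
      using lmeasurable_compact[OF Acomp] by (intro measure_mono_fmeasurable) (auto intro: fmeasurableD)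
    also have "\<dots> \<le> 4 * \<rho>2\<^sup>2 * P" unfolding P_def m_def
      by (rule measure_two_balls[OF m2 _ R0]) (insert a t, simp add: \<rho>2_def)
    also have "\<dots> = 40 * (t / a) * P" unfolding \<rho>2_def using a t by simp
    finally show ?thesis by blast
  qed
  have "48 * m * 3 ^ m * (t / a) * P \<le> (48 * m * 3 ^ m + 40) * (t / a) * P"
       "40 * (t / a) * P \<le> (48 * m * 3 ^ m + 40) * (t / a) * P"
    using t a P0 by (intro mult_right_mono; simp)+
  then show ?thesis using main unfolding A_def P_def m_def by linarith
qed

lemma floor_half:
  fixes x :: real
  assumes "x \<ge> 1"
  shows "real (nat \<lfloor>x\<rfloor>) \<ge> x / 2" "real (nat \<lfloor>x\<rfloor>) \<le> x" "nat \<lfloor>x\<rfloor> \<ge> 1"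
proof -
  have a: "of_int \<lfloor>x\<rfloor> \<ge> (1::real)" using assms by (simp add: le_floor_iff)
  have b: "real (nat \<lfloor>x\<rfloor>) = of_int \<lfloor>x\<rfloor>" using a by simp
  have c: "of_int \<lfloor>x\<rfloor> > x - 1" by linarith
  show "real (nat \<lfloor>x\<rfloor>) \<ge> x / 2" using a b c by linarith
  show "real (nat \<lfloor>x\<rfloor>) \<le> x" using b by linarith
  show "nat \<lfloor>x\<rfloor> \<ge> 1" using a by linarith
qed

lemma slab:
  fixes h :: "real^'k \<Rightarrow> real"
  assumes B: "compact B" "B \<subseteq> cball c \<rho>"
    and hc: "continuous_on B h"
    and u: "norm u = 1" and b: "b > 0" and t: "t > 0" and tr: "3 * t / b \<le> \<rho>"
    and mono: "\<And>x s. x \<in> B \<Longrightarrow> s \<ge> 0 \<Longrightarrow> x + s *\<^sub>R u \<in> B \<Longrightarrow> h (x + s *\<^sub>R u) - h x \<ge> b * s"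
  shows "measure lebesgue {y \<in> B. \<bar>h y\<bar> \<le> t} \<le> 6 * 4 ^ CARD('k) * \<rho> ^ (CARD('k) - 1) * (t / b)"
proof -
  define W where "W = {y \<in> B. \<bar>h y\<bar> \<le> t}"
  define \<tau> where "\<tau> = 3 * t / b"
  define m where "m = CARD('k)"
  have tau0: "\<tau> > 0" unfolding \<tau>_def using t b by simp
  have rho0: "\<rho> > 0" using tau0 tr \<tau>_def by simp
  define J where "J = nat \<lfloor>\<rho> / \<tau>\<rfloor>"
  have x1: "\<rho> / \<tau> \<ge> 1" using tr tau0 by (simp add: \<tau>_def[symmetric])
  have Jge: "real J \<ge> \<rho> / \<tau> / 2" and Jle0: "real J \<le> \<rho> / \<tau>"
    unfolding J_def using floor_half[OF x1] by auto
  have Jle: "real J * \<tau> \<le> \<rho>" using Jle0 tau0 by (simp add: field_simps)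
  have Wc: "compact W" unfolding W_def
  proof -
    have e2: "{y \<in> B. \<bar>h y\<bar> \<le> t} = B \<inter> h -` {-t..t}" by auto
    have "closed (B \<inter> h -` {-t..t})"
      by (rule continuous_closed_preimage[OF hc compact_imp_closed[OF B(1)]]) simp
    moreover have "bounded (B \<inter> h -` {-t..t})"
      using compact_imp_bounded[OF B(1)] bounded_subset by blast
    ultimately show "compact {y \<in> B. \<bar>h y\<bar> \<le> t}" unfolding e2 by (simp add: compact_eq_bounded_closed)
  qed
  define T where "T j = (+) ((real j * \<tau>) *\<^sub>R u) ` W" for j :: nat
  have Tc: "compact (T j)" for j unfolding T_def
    by (intro compact_continuous_image Wc continuous_intros)
  have Tm: "measure lebesgue (T j) = measure lebesgue W" for j
    unfolding T_def by (rule measure_translation)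
  have disj: "disjoint_family_on T {..<J}"
  proof (clarsimp simp: disjoint_family_on_def)
    fix j k :: nat assume jk: "j \<noteq> k"
    show "T j \<inter> T k = {}"
    proof (rule ccontr)
      assume "T j \<inter> T k \<noteq> {}"
      then obtain w1 w2 where w: "w1 \<in> W" "w2 \<in> W" "(real j * \<tau>) *\<^sub>R u + w1 = (real k * \<tau>) *\<^sub>R u + w2"
        unfolding T_def by auto
      have key: False if "w1 \<in> W" "w2 \<in> W" "(real j * \<tau>) *\<^sub>R u + w1 = (real k * \<tau>) *\<^sub>R u + w2" "j < k"
        for j k w1 w2
      proof -
        define s where "s = (real k - real j) * \<tau>"
        have s0: "s \<ge> \<tau>" unfolding s_def using that(4) tau0
          by (simp add: mult_right_mono[of 1 "real k - real j" \<tau>, simplified] less_imp_le)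
        have "w1 = w2 + s *\<^sub>R u" using that(3) unfolding s_def
          by (simp add: algebra_simps scaleR_diff_left)
        then have "h w1 - h w2 \<ge> b * s" using mono[of w2 s] that(1,2) s0 tau0 unfolding W_def by auto
        moreover have "b * s \<ge> 3 * t" using s0 b unfolding \<tau>_def by (simp add: field_simps)
        moreover have "\<bar>h w1\<bar> \<le> t" "\<bar>h w2\<bar> \<le> t" using that(1,2) unfolding W_def by auto
        ultimately show False using t by linarith
      qed
      show False
      proof (cases "j < k")
        case True then show False using key[OF w] by blast
      next
        case False then have "k < j" using jk by simp
        then show False using key[OF w(2,1) w(3)[symmetric]] by blast
      qed
    qed
  qed
  have Tsub: "T j \<subseteq> cball c (2 * \<rho>)" if "j < J" for j
  proof
    fix x assume "x \<in> T j"
    then obtain w where w: "w \<in> W" "x = (real j * \<tau>) *\<^sub>R u + w" unfolding T_def by auto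
    have "dist c w \<le> \<rho>" using w(1) B(2) unfolding W_def by auto
    moreover have "real j * \<tau> \<le> \<rho>" using Jle that tau0
      by (meson less_imp_le mult_right_mono of_nat_le_iff order_trans less_imp_le_nat)
    moreover have "dist w x = real j * \<tau>" using w(2) u tau0 by (simp add: dist_norm)
    ultimately have "dist c x \<le> \<rho> + real j * \<tau>" using dist_triangle[of c x w] by linarith
    then show "x \<in> cball c (2 * \<rho>)" using \<open>real j * \<tau> \<le> \<rho>\<close> by simp
  qed
  have "real J * measure lebesgue W = (\<Sum>j<J. measure lebesgue (T j))" by (simp add: Tm)
  also have "\<dots> = measure lebesgue (\<Union>j<J. T j)"
  proof (rule measure_finite_Union[symmetric])
    show "finite {..<J}" by simp
    show "T ` {..<J} \<subseteq> sets lebesgue" using Tc lmeasurable_compact fmeasurableD by blast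
    show "disjoint_family_on T {..<J}" by (rule disj)
    show "emeasure lebesgue (T j) \<noteq> \<infinity>" for j
      using lmeasurable_compact[OF Tc[of j]] unfolding fmeasurable_def by (metis (mono_tags) mem_Collect_eq less_irrefl)
  qed
  also have "\<dots> \<le> measure lebesgue (cball c (2 * \<rho>))"
  proof (rule measure_mono_fmeasurable)
    show "(\<Union>j<J. T j) \<subseteq> cball c (2 * \<rho>)" using Tsub by blast
    show "(\<Union>j<J. T j) \<in> sets lebesgue" using Tc lmeasurable_compact fmeasurableD by blast
  qed simp
  also have "\<dots> \<le> (2 * (2 * \<rho>)) ^ m" unfolding m_def by (rule measure_cball_le) (use rho0 in simp)
  finally have JW: "real J * measure lebesgue W \<le> (4 * \<rho>) ^ m" by simp
  have m1: "m = Suc (m - 1)" unfolding m_def by simp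
  have "\<rho> / \<tau> / 2 * measure lebesgue W \<le> real J * measure lebesgue W"
    using Jge by (intro mult_right_mono) auto
  then have "\<rho> / \<tau> / 2 * measure lebesgue W \<le> (4 * \<rho>) ^ m" using JW by linarith
  then have "measure lebesgue W \<le> (4 * \<rho>) ^ m * (2 * \<tau> / \<rho>)"
    using rho0 tau0 by (simp add: field_simps)
  also have "\<dots> = 4 ^ m * \<rho> ^ (m - 1) * (2 * \<tau>)"
    using rho0 by (subst m1, subst m1) (simp add: power_mult_distrib field_simps)
  also have "\<dots> = 6 * 4 ^ m * \<rho> ^ (m - 1) * (t / b)" unfolding \<tau>_def by (simp add: field_simps)
  finally show ?thesis unfolding W_def m_def .
qed

lemma connected_avoid:
  fixes f :: "'a::topological_space \<Rightarrow> real"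
  assumes "connected G" "continuous_on G f" "a > 0" "\<And>y. y \<in> G \<Longrightarrow> \<bar>f y\<bar> \<ge> a"
  shows "(\<forall>y\<in>G. f y \<ge> a) \<or> (\<forall>y\<in>G. f y \<le> - a)"
proof (rule ccontr)
  assume "\<not> ?thesis"
  then obtain y1 y2 where y: "y1 \<in> G" "y2 \<in> G" "f y1 < a" "f y2 > - a" by force
  have y1: "f y1 \<le> - a" using assms(4)[OF y(1)] y(3) by linarith
  have y2: "f y2 \<ge> a" using assms(4)[OF y(2)] y(4) by linarith
  have c: "connected (f ` G)" by (rule connected_continuous_image[OF assms(2,1)])
  have iv: "\<forall>x\<in>f ` G. \<forall>y\<in>f ` G. \<forall>z. x \<le> z \<longrightarrow> z \<le> y \<longrightarrow> z \<in> f ` G"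
    using c connected_iff_interval by blast
  have fy1: "f y1 \<in> f ` G" and fy2: "f y2 \<in> f ` G" using y by auto
  have "0 \<in> f ` G" by (rule iv[rule_format, OF fy1 fy2]) (use y1 y2 assms(3) in linarith)+
  then obtain y0 where "y0 \<in> G" "f y0 = 0" by auto
  then show False using assms(3) assms(4)[of y0] by simp
qed

lemma cont_quad_fixed:
  fixes H :: "real^'n \<Rightarrow> real^'k^'k"
  assumes "continuous_on G H"
  shows "continuous_on G (\<lambda>y. (H y *v \<xi>) \<bullet> \<xi>)"
proof -
  have lin: "linear (\<lambda>A::real^'k^'k. A *v \<xi>)"
    by (rule linearI) (simp_all add: matrix_vector_mult_add_rdistrib scaleR_matrix_vector_assoc[symmetric])
  have "continuous_on G (\<lambda>y. H y *v \<xi>)"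
    using linear_continuous_on_compose[OF assms lin] by simp
  then show ?thesis by (intro continuous_intros)
qed

lemma definite_sign:
  fixes H :: "real^'k \<Rightarrow> real^'k^'k"
  assumes m2: "CARD('k) \<ge> 2" and G: "connected G" and Hc: "continuous_on G H" and a: "a > 0"
    and lb: "\<And>y \<xi>. y \<in> G \<Longrightarrow> norm \<xi> = 1 \<Longrightarrow> \<bar>(H y *v \<xi>) \<bullet> \<xi>\<bar> \<ge> a"
  shows "(\<forall>y\<in>G. \<forall>\<xi>. norm \<xi> = 1 \<longrightarrow> (H y *v \<xi>) \<bullet> \<xi> \<ge> a) \<or>
         (\<forall>y\<in>G. \<forall>\<xi>. norm \<xi> = 1 \<longrightarrow> (H y *v \<xi>) \<bullet> \<xi> \<le> - a)"
proof -
  obtain \<xi>0 :: "real^'k" where \<xi>0: "norm \<xi>0 = 1" using vector_choose_size[of 1] by auto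
  have sph: "connected (sphere (0::real^'k) 1)" using m2 by (intro connected_sphere) simp
  have pt: "(\<forall>\<xi>. norm \<xi> = 1 \<longrightarrow> (H y *v \<xi>) \<bullet> \<xi> \<ge> a) \<or> (\<forall>\<xi>. norm \<xi> = 1 \<longrightarrow> (H y *v \<xi>) \<bullet> \<xi> \<le> - a)"
    if y: "y \<in> G" for y
  proof -
    have "(\<forall>\<xi>\<in>sphere 0 1. (H y *v \<xi>) \<bullet> \<xi> \<ge> a) \<or> (\<forall>\<xi>\<in>sphere 0 1. (H y *v \<xi>) \<bullet> \<xi> \<le> - a)"
      by (rule connected_avoid[OF sph _ a]) (auto intro!: continuous_intros lb[OF y])
    then show ?thesis by auto
  qed
  have "(\<forall>y\<in>G. (H y *v \<xi>0) \<bullet> \<xi>0 \<ge> a) \<or> (\<forall>y\<in>G. (H y *v \<xi>0) \<bullet> \<xi>0 \<le> - a)"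
    by (rule connected_avoid[OF G cont_quad_fixed[OF Hc] a]) (rule lb[OF _ \<xi>0])
  then show ?thesis
  proof
    assume A: "\<forall>y\<in>G. (H y *v \<xi>0) \<bullet> \<xi>0 \<ge> a"
    have "\<forall>y\<in>G. \<forall>\<xi>. norm \<xi> = 1 \<longrightarrow> (H y *v \<xi>) \<bullet> \<xi> \<ge> a"
    proof (intro ballI)
      fix y assume y: "y \<in> G"
      show "\<forall>\<xi>. norm \<xi> = 1 \<longrightarrow> (H y *v \<xi>) \<bullet> \<xi> \<ge> a"
        using pt[OF y] A y \<xi>0 a by force
    qed
    then show ?thesis by blast
  next
    assume A: "\<forall>y\<in>G. (H y *v \<xi>0) \<bullet> \<xi>0 \<le> - a"
    have "\<forall>y\<in>G. \<forall>\<xi>. norm \<xi> = 1 \<longrightarrow> (H y *v \<xi>) \<bullet> \<xi> \<le> - a"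
    proof (intro ballI)
      fix y assume y: "y \<in> G"
      show "\<forall>\<xi>. norm \<xi> = 1 \<longrightarrow> (H y *v \<xi>) \<bullet> \<xi> \<le> - a"
        using pt[OF y] A y \<xi>0 a by force
    qed
    then show ?thesis by blast
  qed
qed

definition regf :: "(real^'k) set \<Rightarrow> (real^'k \<Rightarrow> real) \<Rightarrow> (real^'k \<Rightarrow> real^'k) \<Rightarrow> (real^'k \<Rightarrow> real^'k^'k) \<Rightarrow> real \<Rightarrow> bool" where
  "regf S h D H L \<longleftrightarrow> (\<forall>x\<in>S. (h has_derivative (\<lambda>v. D x \<bullet> v)) (at x within S)) \<and>
     (\<forall>x\<in>S. (D has_derivative (\<lambda>v. H x *v v)) (at x within S)) \<and> continuous_on S H \<and>
     (\<forall>x\<in>S. \<bar>h x\<bar> \<le> L \<and> norm (D x) \<le> L \<and> onorm (\<lambda>v. H x *v v) \<le> L)"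

lemma regf_lip_h:
  assumes "regf S h D H L" "convex S" "x \<in> S" "y \<in> S"
  shows "\<bar>h x - h y\<bar> \<le> L * norm (x - y)"
proof -
  have "norm (h x - h y) \<le> L * norm (x - y)"
  proof (rule differentiable_bound[OF assms(2) _ _ assms(3,4)])
    show "(h has_derivative (\<lambda>v. D z \<bullet> v)) (at z within S)" if "z \<in> S" for z
      using assms(1) that unfolding regf_def by blast
    show "onorm (\<lambda>v. D z \<bullet> v) \<le> L" if "z \<in> S" for z
    proof (rule onorm_le)
      fix v
      have "norm (D z \<bullet> v) \<le> norm (D z) * norm v" by (simp add: Cauchy_Schwarz_ineq2)
      also have "\<dots> \<le> L * norm v" using assms(1) that unfolding regf_def by (intro mult_right_mono) auto
      finally show "norm (D z \<bullet> v) \<le> L * norm v" .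
    qed
  qed
  then show ?thesis by simp
qed

lemma regf_lip_D:
  assumes "regf S h D H L" "convex S" "x \<in> S" "y \<in> S"
  shows "norm (D x - D y) \<le> L * norm (x - y)"
proof (rule differentiable_bound[OF assms(2) _ _ assms(3,4)])
  show "(D has_derivative (\<lambda>v. H z *v v)) (at z within S)" if "z \<in> S" for z
    using assms(1) that unfolding regf_def by blast
  show "onorm (\<lambda>v. H z *v v) \<le> L" if "z \<in> S" for z
    using assms(1) that unfolding regf_def by blast
qed

lemma sc_from_hess:
  fixes h :: "real^'k \<Rightarrow> real"
  assumes G: "convex G"
    and d1: "\<And>x. x \<in> G \<Longrightarrow> (h has_derivative (\<lambda>v. D x \<bullet> v)) (at x within G)"
    and d2: "\<And>x. x \<in> G \<Longrightarrow> (D has_derivative (\<lambda>v. H x *v v)) (at x within G)"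
    and pos: "\<And>y v. y \<in> G \<Longrightarrow> (H y *v v) \<bullet> v \<ge> a * (norm v)\<^sup>2"
    and x: "x \<in> G" and y: "y \<in> G" and t: "0 \<le> \<tau>" "\<tau> \<le> 1"
  shows "h ((1 - \<tau>) *\<^sub>R x + \<tau> *\<^sub>R y) \<le> (1 - \<tau>) * h x + \<tau> * h y - a / 2 * \<tau> * (1 - \<tau>) * (norm (x - y))\<^sup>2"
proof -
  define \<phi> where "\<phi> s = h (x + s *\<^sub>R (y - x))" for s
  have "\<phi> \<tau> \<le> (1 - \<tau>) * \<phi> 0 + \<tau> * \<phi> 1 - (a * (norm (y - x))\<^sup>2) / 2 * \<tau> * (1 - \<tau>)"
  proof (rule strong_cvx_1d[where \<phi>' = "\<lambda>s. D (x + s *\<^sub>R (y - x)) \<bullet> (y - x)"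
                                 and \<phi>'' = "\<lambda>s. (H (x + s *\<^sub>R (y - x)) *v (y - x)) \<bullet> (y - x)"])
    show "continuous_on {0..1} \<phi>" unfolding \<phi>_def by (rule seg_cont[OF G x y d1])
    show "(\<phi> has_real_derivative D (x + s *\<^sub>R (y - x)) \<bullet> (y - x)) (at s)" if "0 < s" "s < 1" for s
      unfolding \<phi>_def by (rule seg_real_deriv[OF G x y d1 that])
    show "((\<lambda>s. D (x + s *\<^sub>R (y - x)) \<bullet> (y - x)) has_real_derivative (H (x + s *\<^sub>R (y - x)) *v (y - x)) \<bullet> (y - x)) (at s)"
      if "0 < s" "s < 1" for s
      by (rule seg_real_deriv2[OF G x y d2 that])
    show "a * (norm (y - x))\<^sup>2 \<le> (H (x + s *\<^sub>R (y - x)) *v (y - x)) \<bullet> (y - x)" if "0 < s" "s < 1" for s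
      using pos seg_in[OF G x y, of s] that by auto
  qed (use t in auto)
  moreover have "(1 - \<tau>) *\<^sub>R x + \<tau> *\<^sub>R y = x + \<tau> *\<^sub>R (y - x)" by (simp add: algebra_simps)
  ultimately show ?thesis unfolding \<phi>_def by (simp add: norm_minus_commute mult_ac)
qed

lemma neg_mat_vec: "(- A) *v v = - (A *v (v::real^'n))" for A :: "real^'n^'m"
  by (simp add: matrix_vector_mult_def vec_eq_iff sum_negf)

lemma quad_scale:
  fixes A :: "real^'k^'k"
  assumes "\<And>\<xi>. norm \<xi> = 1 \<Longrightarrow> (A *v \<xi>) \<bullet> \<xi> \<ge> a"
  shows "(A *v v) \<bullet> v \<ge> a * (norm v)\<^sup>2"
proof (cases "v = 0")
  case True then show ?thesis by simp
next
  case False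
  define \<xi> where "\<xi> = (1 / norm v) *\<^sub>R v"
  have n: "norm \<xi> = 1" unfolding \<xi>_def using False by simp
  have v: "v = norm v *\<^sub>R \<xi>" unfolding \<xi>_def using False by simp
  have "(A *v v) \<bullet> v = (norm v)\<^sup>2 * ((A *v \<xi>) \<bullet> \<xi>)"
    by (subst (1 2) v) (simp add: matrix_vector_mult_scaleR power2_eq_square)
  also have "\<dots> \<ge> (norm v)\<^sup>2 * a" using assms[OF n] by (intro mult_left_mono) auto
  finally show ?thesis by (simp add: mult.commute)
qed

lemma convex_case:
  fixes h :: "real^'k \<Rightarrow> real"
  assumes m2: "CARD('k) \<ge> 2"
    and G: "compact G" "convex G" "G \<noteq> {}" "G \<subseteq> cball z R"
    and d1: "\<And>x. x \<in> G \<Longrightarrow> (h has_derivative (\<lambda>v. D x \<bullet> v)) (at x within G)"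
    and d2: "\<And>x. x \<in> G \<Longrightarrow> (D has_derivative (\<lambda>v. H x *v v)) (at x within G)"
    and pos: "\<And>y \<xi>. y \<in> G \<Longrightarrow> norm \<xi> = 1 \<Longrightarrow> (H y *v \<xi>) \<bullet> \<xi> \<ge> a"
    and a: "a > 0" and t: "t > 0"
  shows "measure lebesgue {y \<in> G. \<bar>h y\<bar> \<le> t}
           \<le> (48 * CARD('k) * 3 ^ CARD('k) + 40) * (t / a) * (2*R) ^ (CARD('k) - 2)"
proof (rule shell[OF m2 G _ a t])
  show "continuous_on G h" using d1 by (rule has_derivative_continuous_on)
  show "h ((1 - \<tau>) *\<^sub>R x + \<tau> *\<^sub>R y) \<le> (1 - \<tau>) * h x + \<tau> * h y - a / 2 * \<tau> * (1 - \<tau>) * (norm (x - y))\<^sup>2"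
    if "x \<in> G" "y \<in> G" "0 \<le> \<tau>" "\<tau> \<le> 1" for x y \<tau>
    by (rule sc_from_hess[OF G(2) d1 d2 quad_scale[OF pos] that]) auto
qed

lemma unit_cube_props: "convex (unit_cube :: (real^'k) set)" "compact (unit_cube :: (real^'k) set)"
  unfolding unit_cube_def by auto

lemma piece:
  fixes h :: "real^'k \<Rightarrow> real" and K L t :: real
  assumes m2: "CARD('k) \<ge> 2" and K: "K > 0" and L: "L > 0"
    and reg: "regf unit_cube h D H L"
    and nd: "\<And>x \<xi>. x \<in> unit_cube \<Longrightarrow> norm \<xi> = 1 \<Longrightarrow> L / K \<le> \<bar>h x\<bar> + norm (D x) + \<bar>(H x *v \<xi>) \<bullet> \<xi>\<bar>"
    and t: "t > 0" "t \<le> L / (1536 * K\<^sup>2)" "t \<le> L / (16 * K)"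
  shows "measure lebesgue {y \<in> cball c (1/(32*K)) \<inter> unit_cube. \<bar>h y\<bar> \<le> t}
    \<le> (6 * 4 ^ CARD('k) * (1/(32*K)) ^ (CARD('k) - 1) * (16 * K)
        + (48 * CARD('k) * 3 ^ CARD('k) + 40) * (2 * K) * (2 * (1/(8*K))) ^ (CARD('k) - 2)) * (t / L)"
proof -
  define Q where "Q = (unit_cube :: (real^'k) set)"
  define m where "m = CARD('k)"
  define \<rho> where "\<rho> = 1/(32*K)"
  define R where "R = 1/(8*K)"
  define b where "b = L/(16*K)"
  define a where "a = L/(2*K)"
  define CA where "CA = 6 * 4 ^ m * \<rho> ^ (m - 1) * (16 * K)"
  define CB where "CB = (48 * m * 3 ^ m + 40) * (2 * K) * (2 * R) ^ (m - 2)"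
  have CA0: "CA \<ge> 0" unfolding CA_def \<rho>_def using K by simp
  have CB0: "CB \<ge> 0" unfolding CB_def R_def using K by simp
  have Qc: "convex Q" "compact Q" unfolding Q_def using unit_cube_props by auto
  define Bc where "Bc = cball c \<rho> \<inter> Q"
  define W where "W = {y \<in> Bc. \<bar>h y\<bar> \<le> t}"
  have Bcc: "convex Bc" "compact Bc" unfolding Bc_def using Qc by (auto intro: convex_Int compact_Int_closed)
  have d1Q: "\<And>x. x \<in> Q \<Longrightarrow> (h has_derivative (\<lambda>v. D x \<bullet> v)) (at x within Q)"
    and d2Q: "\<And>x. x \<in> Q \<Longrightarrow> (D has_derivative (\<lambda>v. H x *v v)) (at x within Q)"
    using reg unfolding regf_def Q_def by auto
  have hcQ: "continuous_on Q h" using d1Q by (rule has_derivative_continuous_on)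
  have lipD: "norm (D x - D y) \<le> L * norm (x - y)" if "x \<in> Q" "y \<in> Q" for x y
    using regf_lip_D[OF reg[folded Q_def] Qc(1) that] .
  have liph: "\<bar>h x - h y\<bar> \<le> L * norm (x - y)" if "x \<in> Q" "y \<in> Q" for x y
    using regf_lip_h[OF reg[folded Q_def] Qc(1) that] .
  have goal: "measure lebesgue W \<le> (CA + CB) * (t / L)"
  proof (cases "W = {}")
    case True
    then show ?thesis using CA0 CB0 t L by simp
  next
    case False
    then obtain z where zW: "z \<in> W" by blast
    have zQ: "z \<in> Q" and zc: "dist c z \<le> \<rho>" and hz: "\<bar>h z\<bar> \<le> t" using zW unfolding W_def Bc_def by auto
    show ?thesis
    proof (cases "norm (D z) \<ge> 2 * b")
      case True
      have b0: "b > 0" unfolding b_def using L K by simp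
      have nDz: "norm (D z) > 0" using True b0 by linarith
      define u where "u = (1 / norm (D z)) *\<^sub>R D z"
      have u1: "norm u = 1" unfolding u_def using nDz by simp
      have Dzu: "D z \<bullet> u = norm (D z)" unfolding u_def using nDz
        by (simp add: power2_norm_eq_inner[symmetric] power2_eq_square)
      have Du: "D y \<bullet> u \<ge> b" if y: "y \<in> Bc" for y
      proof -
        have yQ: "y \<in> Q" and yc: "dist c y \<le> \<rho>" using y unfolding Bc_def by auto
        have "norm (y - z) \<le> 2 * \<rho>" using yc zc dist_triangle[of y z c]
          by (simp add: dist_norm norm_minus_commute)
        have "\<bar>(D y - D z) \<bullet> u\<bar> \<le> norm (D y - D z)"
          using Cauchy_Schwarz_ineq2[of "D y - D z" u] u1 by simp
        also have "\<dots> \<le> L * norm (y - z)" by (rule lipD[OF yQ zQ])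
        also have "\<dots> \<le> L * (2 * \<rho>)" using \<open>norm (y - z) \<le> 2 * \<rho>\<close> L by (intro mult_left_mono) auto
        also have "\<dots> = b" unfolding b_def \<rho>_def using K by (simp add: field_simps)
        finally have "\<bar>(D y - D z) \<bullet> u\<bar> \<le> b" .
        moreover have "D y \<bullet> u = D z \<bullet> u + (D y - D z) \<bullet> u" by (simp add: inner_diff_left)
        ultimately show ?thesis using Dzu True by linarith
      qed
      have mono: "h (x + s *\<^sub>R u) - h x \<ge> b * s"
        if x: "x \<in> Bc" and s: "s \<ge> 0" and xs: "x + s *\<^sub>R u \<in> Bc" for x s
      proof (cases "s = 0")
        case True then show ?thesis by simp
      next
        case False
        define y where "y = x + s *\<^sub>R u"
        have xQ: "x \<in> Q" and yQ: "y \<in> Q" using x xs unfolding Bc_def y_def by auto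
        obtain \<xi> where \<xi>: "0 < \<xi>" "\<xi> < 1"
          "h (x + 1 *\<^sub>R (y - x)) - h (x + 0 *\<^sub>R (y - x)) = (1 - 0) * (D (x + \<xi> *\<^sub>R (y - x)) \<bullet> (y - x))"
          using mvt_open[of 0 1 "\<lambda>s. h (x + s *\<^sub>R (y - x))" "\<lambda>s. D (x + s *\<^sub>R (y - x)) \<bullet> (y - x)"]
            seg_cont[OF Qc(1) xQ yQ d1Q] seg_real_deriv[OF Qc(1) xQ yQ d1Q] by auto
        have pB: "x + \<xi> *\<^sub>R (y - x) \<in> Bc" using seg_in[OF Bcc(1) x, of y \<xi>] xs \<xi> unfolding y_def by auto
        have "h y - h x = s * (D (x + \<xi> *\<^sub>R (y - x)) \<bullet> u)" using \<xi>(3) unfolding y_def by simp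
        also have "\<dots> \<ge> s * b" using Du[OF pB] s by (intro mult_left_mono) auto
        finally show ?thesis unfolding y_def by (simp add: mult.commute)
      qed
      have "measure lebesgue W \<le> 6 * 4 ^ CARD('k) * \<rho> ^ (CARD('k) - 1) * (t / b)"
        unfolding W_def
      proof (rule slab[OF Bcc(2) _ _ u1 b0 t(1)])
        show "Bc \<subseteq> cball c \<rho>" unfolding Bc_def by auto
        show "continuous_on Bc h" using hcQ unfolding Bc_def by (rule continuous_on_subset) auto
        show "3 * t / b \<le> \<rho>" unfolding b_def \<rho>_def using t K L by (simp add: field_simps power2_eq_square)
        show "h (x + s *\<^sub>R u) - h x \<ge> b * s" if "x \<in> Bc" "s \<ge> 0" "x + s *\<^sub>R u \<in> Bc" for x s
          using mono that by blast
      qed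
      also have "\<dots> = CA * (t / L)" unfolding CA_def m_def b_def using K L by (simp add: field_simps)
      also have "\<dots> \<le> (CA + CB) * (t / L)" using CB0 t L by (intro mult_right_mono) auto
      finally show ?thesis .
    next
      case False
      define G where "G = cball z R \<inter> Q"
      have Gc: "compact G" "convex G" "G \<noteq> {}" "G \<subseteq> cball z R"
      proof -
        have "z \<in> cball z R" unfolding R_def using K by simp
        then have "z \<in> G" unfolding G_def using zQ by simp
        then show "G \<noteq> {}" by blast
        show "compact G" "convex G" "G \<subseteq> cball z R"
          unfolding G_def using Qc by (auto intro: convex_Int compact_Int_closed)
      qed
      have GQ: "G \<subseteq> Q" unfolding G_def by auto
      have a0: "a > 0" unfolding a_def using L K by simp
      have d1: "\<And>x. x \<in> G \<Longrightarrow> (h has_derivative (\<lambda>v. D x \<bullet> v)) (at x within G)"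
        using d1Q GQ by (meson has_derivative_subset subsetD)
      have d2: "\<And>x. x \<in> G \<Longrightarrow> (D has_derivative (\<lambda>v. H x *v v)) (at x within G)"
        using d2Q GQ by (meson has_derivative_subset subsetD)
      have HcG: "continuous_on G H" using reg GQ unfolding regf_def Q_def by (meson continuous_on_subset)
      have big: "\<bar>(H y *v \<xi>) \<bullet> \<xi>\<bar> \<ge> a" if y: "y \<in> G" and \<xi>: "norm \<xi> = 1" for y \<xi>
      proof -
        have yQ: "y \<in> Q" and yz: "norm (y - z) \<le> R" using y unfolding G_def
          by (auto simp: dist_norm norm_minus_commute)
        have "\<bar>h y - h z\<bar> \<le> L * norm (y - z)" by (rule liph[OF yQ zQ])
        also have "\<dots> \<le> L * R" using yz L by (intro mult_left_mono) auto
        finally have h1: "\<bar>h y\<bar> \<le> t + L * R" using hz by linarith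
        have "norm (D y - D z) \<le> L * norm (y - z)" by (rule lipD[OF yQ zQ])
        also have "\<dots> \<le> L * R" using yz L by (intro mult_left_mono) auto
        finally have h2: "norm (D y) \<le> 2 * b + L * R" using False norm_triangle_ineq2[of "D y" "D z"] by linarith
        have "L / K \<le> \<bar>h y\<bar> + norm (D y) + \<bar>(H y *v \<xi>) \<bullet> \<xi>\<bar>" using nd yQ \<xi> unfolding Q_def by blast
        moreover have "t + L * R + (2 * b + L * R) \<le> 7 * L / (16 * K)"
          using t(3) unfolding R_def b_def using K by (simp add: field_simps)
        moreover have "L / K - 7 * L / (16 * K) \<ge> a" unfolding a_def using K L by (simp add: field_simps)
        ultimately show ?thesis using h1 h2 by linarith
      qed
      have Wsub: "W \<subseteq> {y \<in> G. \<bar>h y\<bar> \<le> t}"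
      proof
        fix y assume "y \<in> W"
        then have y: "y \<in> Q" "dist c y \<le> \<rho>" "\<bar>h y\<bar> \<le> t" unfolding W_def Bc_def by auto
        have "dist z y \<le> 2 * \<rho>" using y(2) zc dist_triangle[of z y c] by (simp add: dist_commute)
        also have "\<dots> \<le> R" unfolding \<rho>_def R_def using K by (simp add: field_simps)
        finally show "y \<in> {y \<in> G. \<bar>h y\<bar> \<le> t}" using y unfolding G_def by auto
      qed
      have Gm: "measure lebesgue {y \<in> G. \<bar>h y\<bar> \<le> t} \<le> (48 * CARD('k) * 3 ^ CARD('k) + 40) * (t / a) * (2*R) ^ (CARD('k) - 2)"
      proof -
        have "(\<forall>y\<in>G. \<forall>\<xi>. norm \<xi> = 1 \<longrightarrow> (H y *v \<xi>) \<bullet> \<xi> \<ge> a) \<or> (\<forall>y\<in>G. \<forall>\<xi>. norm \<xi> = 1 \<longrightarrow> (H y *v \<xi>) \<bullet> \<xi> \<le> - a)"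
          by (rule definite_sign[OF m2 convex_connected[OF Gc(2)] HcG a0 big])
        then show ?thesis
        proof
          assume P: "\<forall>y\<in>G. \<forall>\<xi>. norm \<xi> = 1 \<longrightarrow> (H y *v \<xi>) \<bullet> \<xi> \<ge> a"
          show ?thesis by (rule convex_case[OF m2 Gc d1 d2 _ a0 t(1)]) (use P in auto)
        next
          assume P: "\<forall>y\<in>G. \<forall>\<xi>. norm \<xi> = 1 \<longrightarrow> (H y *v \<xi>) \<bullet> \<xi> \<le> - a"
          have "measure lebesgue {y \<in> G. \<bar>(- h y)\<bar> \<le> t} \<le> (48 * CARD('k) * 3 ^ CARD('k) + 40) * (t / a) * (2*R) ^ (CARD('k) - 2)"
          proof (rule convex_case[OF m2 Gc, where D="\<lambda>x. - D x" and H="\<lambda>x. - H x"])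
            show "((\<lambda>y. - h y) has_derivative (\<lambda>v. (- D x) \<bullet> v)) (at x within G)" if "x \<in> G" for x
              using has_derivative_minus[OF d1[OF that]] by simp
            show "((\<lambda>x. - D x) has_derivative (\<lambda>v. (- H x) *v v)) (at x within G)" if "x \<in> G" for x
              using has_derivative_minus[OF d2[OF that]] by (simp add: neg_mat_vec)
            show "((- H y) *v \<xi>) \<bullet> \<xi> \<ge> a" if "y \<in> G" "norm \<xi> = 1" for y \<xi>
              using P that by (simp add: neg_mat_vec) (metis le_minus_iff)
          qed (use a0 t in auto)
          then show ?thesis by simp
        qed
      qed
      have "measure lebesgue W \<le> measure lebesgue {y \<in> G. \<bar>h y\<bar> \<le> t}"
      proof (rule measure_mono_fmeasurable[OF Wsub])
        show "W \<in> sets lebesgue" unfolding W_def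
          using lmeasurable_compact[OF closed_sublevel_compact(2)[OF Bcc(2), of h t]] hcQ
          by (metis Bc_def continuous_on_subset fmeasurableD inf.cobounded2 closed_sublevel_compact(2)[OF Bcc(2)] lmeasurable_compact)
        show "{y \<in> G. \<bar>h y\<bar> \<le> t} \<in> fmeasurable lebesgue"
          using closed_sublevel_compact(2)[OF Gc(1)] hcQ GQ by (meson continuous_on_subset lmeasurable_compact)
      qed
      also have "\<dots> \<le> CB * (t / L)" using Gm unfolding CB_def m_def a_def using K L
        by (simp add: field_simps)
      also have "\<dots> \<le> (CA + CB) * (t / L)" using CA0 t L by (intro mult_right_mono) auto
      finally show ?thesis .
    qed
  qed
  then show ?thesis unfolding W_def Bc_def Q_def CA_def CB_def m_def \<rho>_def R_def .
qed

lemma sublevel: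
  fixes K :: real
  assumes m2: "CARD('k) \<ge> 2" and K: "K > 0"
  shows "\<exists>C0>0. \<forall>(h :: real^'k \<Rightarrow> real) D H L t. L > 0 \<and> regf unit_cube h D H L \<and>
     (\<forall>x \<xi>. x \<in> unit_cube \<longrightarrow> norm \<xi> = 1 \<longrightarrow> L / K \<le> \<bar>h x\<bar> + norm (D x) + \<bar>(H x *v \<xi>) \<bullet> \<xi>\<bar>) \<and>
     t > 0 \<and> t \<le> L / (1536 * K\<^sup>2) \<and> t \<le> L / (16 * K)
     \<longrightarrow> measure lebesgue {x \<in> unit_cube. \<bar>h x\<bar> \<le> t} \<le> C0 * (t / L)"
proof -
  define \<rho> where "\<rho> = 1/(32*K)"
  define CP where "CP = (6 * 4 ^ CARD('k) * (1/(32*K)) ^ (CARD('k) - 1) * (16 * K)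
        + (48 * CARD('k) * 3 ^ CARD('k) + 40) * (2 * K) * (2 * (1/(8*K))) ^ (CARD('k) - 2))"
  have CP0: "CP \<ge> 0" unfolding CP_def using K by simp
  have rho0: "\<rho> > 0" unfolding \<rho>_def using K by simp
  obtain Ctr where Ctr: "finite Ctr" "Ctr \<subseteq> (unit_cube :: (real^'k) set)" "unit_cube \<subseteq> (\<Union>c\<in>Ctr. ball c \<rho>)"
  proof -
    have "\<forall>\<epsilon>>0. \<exists>k. finite k \<and> k \<subseteq> (unit_cube :: (real^'k) set) \<and> unit_cube \<subseteq> (\<Union>x\<in>k. ball x \<epsilon>)"
      by (rule seq_compact_imp_totally_bounded[OF compact_imp_seq_compact[OF unit_cube_props(2)]])
    then obtain k where "finite k" "k \<subseteq> (unit_cube :: (real^'k) set)" "unit_cube \<subseteq> (\<Union>x\<in>k. ball x \<rho>)"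
      using rho0 by meson
    then show ?thesis by (rule that)
  qed
  define C0 where "C0 = (real (card Ctr) + 1) * (CP + 1)"
  have C0p: "C0 > 0" unfolding C0_def using CP0 by (simp add: add_pos_nonneg)
  show ?thesis
  proof (intro exI[of _ C0] conjI allI impI C0p)
    fix h :: "real^'k \<Rightarrow> real" and D H L t
    assume A: "L > 0 \<and> regf unit_cube h D H L \<and>
     (\<forall>x \<xi>. x \<in> unit_cube \<longrightarrow> norm \<xi> = 1 \<longrightarrow> L / K \<le> \<bar>h x\<bar> + norm (D x) + \<bar>(H x *v \<xi>) \<bullet> \<xi>\<bar>) \<and>
     t > 0 \<and> t \<le> L / (1536 * K\<^sup>2) \<and> t \<le> L / (16 * K)"
    then have L: "L > 0" and reg: "regf unit_cube h D H L" and t: "t > 0" "t \<le> L / (1536 * K\<^sup>2)" "t \<le> L / (16 * K)"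
      and nd: "\<And>x \<xi>. x \<in> unit_cube \<Longrightarrow> norm \<xi> = 1 \<Longrightarrow> L / K \<le> \<bar>h x\<bar> + norm (D x) + \<bar>(H x *v \<xi>) \<bullet> \<xi>\<bar>"
      by auto
    define P where "P c = {y \<in> cball c \<rho> \<inter> unit_cube. \<bar>h y\<bar> \<le> t}" for c
    have hc: "continuous_on unit_cube h"
      using reg unfolding regf_def by (meson has_derivative_continuous_on)
    have Pc: "compact (P c)" for c unfolding P_def
    proof (rule closed_sublevel_compact(2))
      show "compact (cball c \<rho> \<inter> unit_cube)" by (rule compact_Int_closed) (auto simp: unit_cube_def)
      show "continuous_on (cball c \<rho> \<inter> unit_cube) h" by (rule continuous_on_subset[OF hc]) simp
    qed
    have Pm: "measure lebesgue (P c) \<le> CP * (t / L)" for c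
      unfolding P_def CP_def \<rho>_def by (rule piece[OF m2 K L reg nd t])
    have sub: "{x \<in> unit_cube. \<bar>h x\<bar> \<le> t} \<subseteq> (\<Union>c\<in>Ctr. P c)"
    proof
      fix x assume x: "x \<in> {x \<in> unit_cube. \<bar>h x\<bar> \<le> t}"
      then obtain c where "c \<in> Ctr" "x \<in> ball c \<rho>" using Ctr(3) by blast
      then show "x \<in> (\<Union>c\<in>Ctr. P c)" using x unfolding P_def by (auto intro!: bexI[of _ c])
    qed
    have "measure lebesgue {x \<in> unit_cube. \<bar>h x\<bar> \<le> t} \<le> measure lebesgue (\<Union>c\<in>Ctr. P c)"
    proof (rule measure_mono_fmeasurable[OF sub])
      show "{x \<in> unit_cube. \<bar>h x\<bar> \<le> t} \<in> sets lebesgue"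
        using lmeasurable_compact[OF closed_sublevel_compact(2)[OF unit_cube_props(2) hc]] fmeasurableD by blast
      show "(\<Union>c\<in>Ctr. P c) \<in> fmeasurable lebesgue"
        using Ctr(1) Pc by (intro lmeasurable_compact compact_UN) auto
    qed
    also have "\<dots> \<le> (\<Sum>c\<in>Ctr. measure lebesgue (P c))"
      using Ctr(1) Pc by (intro measure_UNION_le) (auto intro: fmeasurableD lmeasurable_compact)
    also have "\<dots> \<le> (\<Sum>c\<in>Ctr. CP * (t / L))" by (intro sum_mono Pm)
    also have "\<dots> = real (card Ctr) * CP * (t / L)" by simp
    also have "\<dots> \<le> C0 * (t / L)" unfolding C0_def using CP0 t L
      by (intro mult_right_mono) (auto simp: algebra_simps)
    finally show "measure lebesgue {x \<in> unit_cube. \<bar>h x\<bar> \<le> t} \<le> C0 * (t / L)" .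
  qed
qed

definition qbox :: "real \<Rightarrow> real^'k \<Rightarrow> (real^'k) set" where
  "qbox l x = cbox (\<chi> j. if x$j \<le> 1/2 then x$j else x$j - l) ((\<chi> j. if x$j \<le> 1/2 then x$j else x$j - l) + l *\<^sub>R 1)"

lemma qbox_props:
  fixes x :: "real^'k" and l :: real
  assumes x: "x \<in> unit_cube" and l: "0 \<le> l" "l \<le> 1/2"
  shows "qbox l x \<subseteq> unit_cube" "qbox l x \<subseteq> cball x (CARD('k) * l)"
    "measure lebesgue (qbox l x) = l ^ CARD('k)"
proof -
  define lo :: "real^'k" where "lo = (\<chi> j. if x$j \<le> 1/2 then x$j else x$j - l)"
  have x01: "0 \<le> x$j \<and> x$j \<le> 1" for j using x unfolding unit_cube_def by (auto simp: mem_box_cart)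
  have comp: "y$j - x$j \<le> l \<and> x$j - y$j \<le> l \<and> 0 \<le> y$j \<and> y$j \<le> 1" if y: "y \<in> qbox l x" for y j
  proof -
    have "lo$j \<le> y$j" "y$j \<le> lo$j + l" using y unfolding qbox_def lo_def[symmetric] by (auto simp: mem_box_cart)
    moreover have "lo$j = (if x$j \<le> 1/2 then x$j else x$j - l)" unfolding lo_def by simp
    ultimately show ?thesis using x01[of j] l by (cases "x$j \<le> 1/2") auto
  qed
  show "qbox l x \<subseteq> unit_cube"
  proof
    fix y assume "y \<in> qbox l x"
    then have "0 \<le> y$j \<and> y$j \<le> 1" for j using comp by blast
    then show "y \<in> unit_cube" unfolding unit_cube_def by (simp add: mem_box_cart)
  qed
  show "qbox l x \<subseteq> cball x (CARD('k) * l)"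
  proof
    fix y assume y: "y \<in> qbox l x"
    have "norm (x - y) \<le> (\<Sum>j\<in>UNIV. \<bar>(x - y)$j\<bar>)" by (rule norm_le_l1_cart)
    also have "\<dots> \<le> (\<Sum>j\<in>(UNIV::'k set). l)"
      by (intro sum_mono) (use comp[OF y] in \<open>auto simp: abs_le_iff\<close>)
    also have "\<dots> = CARD('k) * l" by simp
    finally show "y \<in> cball x (CARD('k) * l)" by (simp add: dist_norm)
  qed
  show "measure lebesgue (qbox l x) = l ^ CARD('k)"
    unfolding qbox_def using measure_cube_cart[OF l(1)] by blast
qed

lemma packing:
  fixes S :: "(real^'k) set" and r :: real
  assumes S: "finite S" "S \<subseteq> unit_cube" and r: "0 < r" "r \<le> 1"
    and sep: "\<And>x y. x \<in> S \<Longrightarrow> y \<in> S \<Longrightarrow> x \<noteq> y \<Longrightarrow> dist x y \<ge> r"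
    and V: "V \<in> lmeasurable" "\<And>x. x \<in> S \<Longrightarrow> cball x (r/4) \<inter> unit_cube \<subseteq> V"
  shows "real (card S) * (r / (4 * CARD('k))) ^ CARD('k) \<le> measure lebesgue V"
proof -
  define l where "l = r / (4 * CARD('k))"
  have c1: "real CARD('k) \<ge> 1" by (simp add: Suc_le_eq)
  have l: "0 \<le> l" "l \<le> 1/2"
  proof -
    show "0 \<le> l" unfolding l_def using r by simp
    have "r \<le> 2 * real CARD('k)" using r c1 by linarith
    then show "l \<le> 1/2" unfolding l_def using c1 by (simp add: field_simps)
  qed
  have ml: "CARD('k) * l = r / 4" unfolding l_def by simp
  have sub: "qbox l x \<subseteq> cball x (r/4) \<inter> unit_cube" if "x \<in> S" for x
  proof -
    have xQ: "x \<in> unit_cube" using that S(2) by blast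
    have "qbox l x \<subseteq> cball x (CARD('k) * l)" by (rule qbox_props(2)[OF xQ l])
    then have "qbox l x \<subseteq> cball x (r/4)" by (simp only: ml)
    then show ?thesis using qbox_props(1)[OF xQ l] by blast
  qed
  have disj: "disjoint_family_on (qbox l) S"
  proof (clarsimp simp: disjoint_family_on_def)
    fix x y assume xy: "x \<in> S" "y \<in> S" "x \<noteq> y"
    show "qbox l x \<inter> qbox l y = {}"
    proof (rule ccontr)
      assume "qbox l x \<inter> qbox l y \<noteq> {}"
      then obtain w where w: "w \<in> qbox l x" "w \<in> qbox l y" by blast
      have "w \<in> cball x (r/4)" using sub[OF xy(1)] w(1) by blast
      moreover have "w \<in> cball y (r/4)" using sub[OF xy(2)] w(2) by blast
      ultimately have "dist x w \<le> r/4" "dist y w \<le> r/4" by auto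
      moreover have "dist x y \<le> dist x w + dist y w" by (rule dist_triangle2)
      ultimately have "dist x y \<le> r/2" by linarith
      then show False using sep[OF xy] r by simp
    qed
  qed
  have "real (card S) * l ^ CARD('k) = (\<Sum>x\<in>S. measure lebesgue (qbox l x))"
  proof -
    have "(\<Sum>x\<in>S. measure lebesgue (qbox l x)) = (\<Sum>x\<in>S. l ^ CARD('k))"
    proof (rule sum.cong)
      fix x assume "x \<in> S"
      then have "x \<in> unit_cube" using S(2) by blast
      then show "measure lebesgue (qbox l x) = l ^ CARD('k)" by (rule qbox_props(3)[OF _ l])
    qed simp
    then show ?thesis by simp
  qed
  also have "\<dots> = measure lebesgue (\<Union>x\<in>S. qbox l x)"
  proof (rule measure_finite_Union[symmetric, OF S(1) _ disj])
    have qs: "qbox l x \<in> sets lebesgue" for x unfolding qbox_def by (rule fmeasurableD[OF lmeasurable_cbox])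
    then show "qbox l ` S \<subseteq> sets lebesgue" by blast
    show "emeasure lebesgue (qbox l x) \<noteq> \<infinity>" for x
    proof -
      have "qbox l x \<in> lmeasurable" unfolding qbox_def by (rule lmeasurable_cbox)
      then show ?thesis unfolding fmeasurable_def by (metis (mono_tags) mem_Collect_eq less_irrefl)
    qed
  qed
  also have "\<dots> \<le> measure lebesgue V"
  proof (rule measure_mono_fmeasurable[OF _ _ V(1)])
    show "(\<Union>x\<in>S. qbox l x) \<subseteq> V"
    proof (rule UN_least)
      fix x assume "x \<in> S"
      then show "qbox l x \<subseteq> V" using sub[of x] V(2)[of x] by (rule_tac order_trans) auto
    qed
    have qs: "qbox l x \<in> sets lebesgue" for x unfolding qbox_def by (rule fmeasurableD[OF lmeasurable_cbox])
    show "(\<Union>x\<in>S. qbox l x) \<in> sets lebesgue" using S(1) qs by (intro sets.finite_UN) auto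
  qed
  finally show ?thesis unfolding l_def .
qed

lemma cov_exists:
  fixes A :: "'a::metric_space set"
  assumes "finite A" "\<delta> \<ge> 0"
  shows "\<exists>G. finite G \<and> card G = cov_num \<delta> A \<and> A \<subseteq> (\<Union>c\<in>G. cball c \<delta>)"
proof -
  have ex: "\<exists>N G. finite G \<and> card G = N \<and> A \<subseteq> (\<Union>c\<in>G. cball c \<delta>)"
    using assms by (intro exI[of _ "card A"] exI[of _ A]) auto
  then show ?thesis unfolding cov_num_def by (rule LeastI_ex)
qed

lemma cov_le:
  fixes A :: "'a::metric_space set"
  assumes "finite G" "A \<subseteq> (\<Union>c\<in>G. cball c \<delta>)"
  shows "cov_num \<delta> A \<le> card G"
  unfolding cov_num_def using assms by (intro Least_le) blast

lemma cov_le_card: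
  fixes A :: "'a::metric_space set"
  assumes "finite A" "\<delta> \<ge> 0"
  shows "cov_num \<delta> A \<le> card A"
  by (rule cov_le[OF assms(1)]) (use assms(2) in auto)

lemma cov_union:
  fixes B :: "'a::metric_space set"
  assumes I: "finite I" and fin: "\<And>i. i \<in> I \<Longrightarrow> finite (A i)" and d: "\<delta> \<ge> 0"
    and sub: "B \<subseteq> (\<Union>i\<in>I. A i)"
  shows "cov_num \<delta> B \<le> (\<Sum>i\<in>I. cov_num \<delta> (A i))"
proof -
  have "\<forall>i\<in>I. \<exists>G. finite G \<and> card G = cov_num \<delta> (A i) \<and> A i \<subseteq> (\<Union>c\<in>G. cball c \<delta>)"
    using cov_exists fin d by blast
  then obtain G where G: "\<And>i. i \<in> I \<Longrightarrow> finite (G i) \<and> card (G i) = cov_num \<delta> (A i) \<and> A i \<subseteq> (\<Union>c\<in>G i. cball c \<delta>)"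
    by metis
  have fG: "finite (\<Union>i\<in>I. G i)" using I G by blast
  have "B \<subseteq> (\<Union>c\<in>(\<Union>i\<in>I. G i). cball c \<delta>)"
  proof
    fix x assume "x \<in> B"
    then obtain i where i: "i \<in> I" "x \<in> A i" using sub by blast
    then obtain c where "c \<in> G i" "x \<in> cball c \<delta>" using G[OF i(1)] by blast
    then show "x \<in> (\<Union>c\<in>(\<Union>i\<in>I. G i). cball c \<delta>)" using i(1) by blast
  qed
  then have "cov_num \<delta> B \<le> card (\<Union>i\<in>I. G i)" by (rule cov_le[OF fG])
  also have "\<dots> \<le> (\<Sum>i\<in>I. card (G i))" by (rule card_UN_le[OF I])
  also have "\<dots> = (\<Sum>i\<in>I. cov_num \<delta> (A i))" using G by (intro sum.cong) auto
  finally show ?thesis .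
qed

lemma max_separated:
  fixes A :: "'a::metric_space set"
  assumes "finite A" "r > 0"
  shows "\<exists>S\<subseteq>A. (\<forall>x\<in>S. \<forall>y\<in>S. x \<noteq> y \<longrightarrow> dist x y \<ge> r) \<and> (\<forall>a\<in>A. \<exists>x\<in>S. dist a x < r)"
  using assms(1)
proof (induction A rule: finite_induct)
  case empty then show ?case by auto
next
  case (insert a A)
  then obtain S where S: "S \<subseteq> A" "\<forall>x\<in>S. \<forall>y\<in>S. x \<noteq> y \<longrightarrow> dist x y \<ge> r" "\<forall>a\<in>A. \<exists>x\<in>S. dist a x < r"
    by blast
  show ?case
  proof (cases "\<exists>x\<in>S. dist a x < r")
    case True
    then show ?thesis using S by (intro exI[of _ S]) auto
  next
    case False
    have "insert a S \<subseteq> insert a A" using S by auto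
    moreover have "\<forall>x\<in>insert a S. \<forall>y\<in>insert a S. x \<noteq> y \<longrightarrow> dist x y \<ge> r"
      using S(2) False by (auto simp: dist_commute not_less)
    moreover have "\<forall>b\<in>insert a A. \<exists>x\<in>insert a S. dist b x < r"
      using S(3) assms(2) by auto
    ultimately show ?thesis by blast
  qed
qed

lemma basis_cube: "\<And>i. i \<in> Basis \<Longrightarrow> (0::real^'k) \<bullet> i < (1::real^'k) \<bullet> i"
  by (auto simp: Basis_vec_def inner_axis)

lemma uniq_vec:
  fixes \<phi> :: "real^'k \<Rightarrow> real"
  assumes x: "x \<in> unit_cube"
    and d1: "(\<phi> has_derivative (\<lambda>v. v1 \<bullet> v)) (at x within unit_cube)"
    and d2: "(\<phi> has_derivative (\<lambda>v. v2 \<bullet> v)) (at x within unit_cube)"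
  shows "v1 = v2"
proof -
  have "(\<lambda>v. v1 \<bullet> v) = (\<lambda>v. v2 \<bullet> v)"
    using frechet_derivative_unique_within_closed_interval[OF basis_cube, of x \<phi>] x d1 d2
    unfolding unit_cube_def by blast
  then have "v1 \<bullet> (v1 - v2) = v2 \<bullet> (v1 - v2)" by metis
  then have "(v1 - v2) \<bullet> (v1 - v2) = 0" by (simp add: inner_diff_left)
  then show ?thesis by simp
qed

lemma uniq_mat:
  fixes \<phi> :: "real^'k \<Rightarrow> real^'k"
  assumes x: "x \<in> unit_cube"
    and d1: "(\<phi> has_derivative (\<lambda>v. M1 *v v)) (at x within unit_cube)"
    and d2: "(\<phi> has_derivative (\<lambda>v. M2 *v v)) (at x within unit_cube)"
  shows "M1 = M2"
proof -
  have "(\<lambda>v. M1 *v v) = (\<lambda>v. M2 *v v)"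
    using frechet_derivative_unique_within_closed_interval[OF basis_cube, of x \<phi>] x d1 d2
    unfolding unit_cube_def by blast
  then show ?thesis by (simp add: matrix_eq fun_eq_iff)
qed

lemma grad_works:
  assumes "(f has_derivative (\<lambda>h. v \<bullet> h)) (at x within U)"
  shows "(f has_derivative (\<lambda>h. grad U f x \<bullet> h)) (at x within U)"
  unfolding grad_def by (rule someI[of _ v]) (rule assms)

lemma hess_works:
  assumes "(grad U f has_derivative (\<lambda>h. M *v h)) (at x within U)"
  shows "(grad U f has_derivative (\<lambda>h. hess U f x *v h)) (at x within U)"
  unfolding hess_def by (rule someI[of _ M]) (rule assms)

lemma bdd_cont:
  fixes \<phi> :: "real^'k \<Rightarrow> real"
  assumes "continuous_on unit_cube \<phi>"
  shows "bdd_above (\<phi> ` unit_cube)"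
proof -
  have "compact (\<phi> ` unit_cube)"
    by (rule compact_continuous_image[OF assms]) (simp add: unit_cube_def)
  then show ?thesis by (intro bounded_imp_bdd_above compact_imp_bounded)
qed

lemma cin_regf:
  fixes F :: "(real^'k \<Rightarrow> real) set"
  assumes cin: "cinematic unit_cube F K D \<alpha> \<eta>0" and f: "f \<in> F" and g: "g \<in> F"
  shows "regf unit_cube (\<lambda>x. f x - g x) (grad unit_cube (\<lambda>x. f x - g x)) (hess unit_cube (\<lambda>x. f x - g x))
           (C2_norm unit_cube (\<lambda>x. f x - g x))"
    and "\<And>x \<xi>. x \<in> unit_cube \<Longrightarrow> norm \<xi> = 1 \<Longrightarrow>
           C2_norm unit_cube (\<lambda>x. f x - g x) / K \<le> \<bar>f x - g x\<bar> + norm (grad unit_cube (\<lambda>x. f x - g x) x)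
             + \<bar>(hess unit_cube (\<lambda>x. f x - g x) x *v \<xi>) \<bullet> \<xi>\<bar>"
proof -
  define Q where "Q = (unit_cube :: (real^'k) set)"
  define h where "h = (\<lambda>x. f x - g x)"
  have K: "K > 0" and C2f: "C2_on Q f" and C2g: "C2_on Q g"
    using cin f g unfolding cinematic_def Q_def by auto
  have nd3: "C2_norm Q h / K \<le> (INF x\<in>Q. \<bar>f x - g x\<bar> + norm (grad Q f x - grad Q g x) + \<bar>dd2 Q h \<xi> x\<bar>)"
    if "norm \<xi> = 1" for \<xi>
    using cin f g that unfolding cinematic_def Q_def h_def by blast
  have df: "(f has_derivative (\<lambda>v. grad Q f x \<bullet> v)) (at x within Q)"
    and d2f: "(grad Q f has_derivative (\<lambda>v. hess Q f x *v v)) (at x within Q)" if "x \<in> Q" for x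
    using C2f that unfolding C2_on_def by auto
  have dg: "(g has_derivative (\<lambda>v. grad Q g x \<bullet> v)) (at x within Q)"
    and d2g: "(grad Q g has_derivative (\<lambda>v. hess Q g x *v v)) (at x within Q)" if "x \<in> Q" for x
    using C2g that unfolding C2_on_def by auto
  have hd0: "(h has_derivative (\<lambda>v. (grad Q f x - grad Q g x) \<bullet> v)) (at x within Q)" if "x \<in> Q" for x
    unfolding h_def using has_derivative_diff[OF df[OF that] dg[OF that]] by (simp add: inner_diff_left)
  have hd: "(h has_derivative (\<lambda>v. grad Q h x \<bullet> v)) (at x within Q)" if "x \<in> Q" for x
    by (rule grad_works[OF hd0[OF that]])
  have gh: "grad Q h x = grad Q f x - grad Q g x" if "x \<in> Q" for x
    using uniq_vec[of x h] hd[OF that] hd0[OF that] that unfolding Q_def by blast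
  have gd0: "(grad Q h has_derivative (\<lambda>v. (hess Q f x - hess Q g x) *v v)) (at x within Q)" if "x \<in> Q" for x
  proof -
    have "((\<lambda>y. grad Q f y - grad Q g y) has_derivative (\<lambda>v. (hess Q f x - hess Q g x) *v v)) (at x within Q)"
      using has_derivative_diff[OF d2f[OF that] d2g[OF that]] by (simp add: matrix_vector_mult_diff_rdistrib)
    then show ?thesis
      by (rule has_derivative_transform_within[where d=1]) (use that gh in auto)
  qed
  have gd: "(grad Q h has_derivative (\<lambda>v. hess Q h x *v v)) (at x within Q)" if "x \<in> Q" for x
    by (rule hess_works[OF gd0[OF that]])
  have hh: "hess Q h x = hess Q f x - hess Q g x" if "x \<in> Q" for x
    using uniq_mat[of x "grad Q h"] gd[OF that] gd0[OF that] that unfolding Q_def by blast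
  have Hc: "continuous_on Q (hess Q h)"
  proof -
    have "continuous_on Q (\<lambda>x. hess Q f x - hess Q g x)"
      using C2f C2g unfolding C2_on_def by (intro continuous_on_diff) auto
    then show ?thesis using hh by (metis (no_types, lifting) continuous_on_cong)
  qed
  have hc: "continuous_on Q h" using hd by (rule has_derivative_continuous_on)
  have gc: "continuous_on Q (grad Q h)" using gd by (rule has_derivative_continuous_on)
  have Qc: "compact Q" unfolding Q_def unit_cube_def by simp
  obtain B where B: "\<And>x. x \<in> Q \<Longrightarrow> norm (hess Q h x) \<le> B"
  proof -
    have "bounded (hess Q h ` Q)" by (intro compact_imp_bounded compact_continuous_image Hc Qc)
    then show ?thesis using that by (auto simp: bounded_iff)
  qed
  have onB: "onorm (\<lambda>v. hess Q h x *v v) \<le> real CARD('k) * real CARD('k) * B" if "x \<in> Q" for x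
  proof -
    have "\<bar>hess Q h x $ i $ j\<bar> \<le> B" for i j
      using component_le_norm_cart[of "hess Q h x $ i" j] Finite_Cartesian_Product.norm_nth_le[of "hess Q h x" i] B[OF that]
      by linarith
    then show ?thesis using onorm_le_matrix_component[of "hess Q h x" B] by simp
  qed
  define S1 where "S1 = (SUP x\<in>Q. \<bar>h x\<bar>)"
  define S2 where "S2 = (SUP x\<in>Q. norm (grad Q h x))"
  define S3 where "S3 = (SUP x\<in>Q. onorm (\<lambda>v. hess Q h x *v v))"
  have L: "C2_norm Q h = S1 + S2 + S3" unfolding C2_norm_def S1_def S2_def S3_def by simp
  have b1: "bdd_above ((\<lambda>x. \<bar>h x\<bar>) ` Q)" unfolding Q_def by (rule bdd_cont) (use hc Q_def in \<open>auto intro: continuous_intros\<close>)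
  have b2: "bdd_above ((\<lambda>x. norm (grad Q h x)) ` Q)" unfolding Q_def by (rule bdd_cont) (use gc Q_def in \<open>auto intro: continuous_intros\<close>)
  have b3: "bdd_above ((\<lambda>x. onorm (\<lambda>v. hess Q h x *v v)) ` Q)"
    using onB by (intro bdd_aboveI2) auto
  have u1: "\<bar>h x\<bar> \<le> S1" if "x \<in> Q" for x unfolding S1_def using b1 that by (rule cSUP_upper2) auto
  have u2: "norm (grad Q h x) \<le> S2" if "x \<in> Q" for x unfolding S2_def using b2 that by (rule cSUP_upper2) auto
  have u3: "onorm (\<lambda>v. hess Q h x *v v) \<le> S3" if "x \<in> Q" for x unfolding S3_def using b3 that by (rule cSUP_upper2) auto
  have x0: "(0::real^'k) \<in> Q" unfolding Q_def unit_cube_def by (simp add: mem_box_cart)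
  have p1: "S1 \<ge> 0" using u1[OF x0] by linarith
  have p2: "S2 \<ge> 0" using u2[OF x0] norm_ge_zero[of "grad Q h 0"] by linarith
  have p3: "S3 \<ge> 0" using u3[OF x0] onorm_pos_le[of "\<lambda>v. hess Q h 0 *v v"] by simp
  show "regf unit_cube (\<lambda>x. f x - g x) (grad unit_cube (\<lambda>x. f x - g x)) (hess unit_cube (\<lambda>x. f x - g x))
           (C2_norm unit_cube (\<lambda>x. f x - g x))"
    unfolding regf_def Q_def[symmetric] h_def[symmetric] L
  proof (intro conjI ballI)
    fix x assume x: "x \<in> Q"
    show "(h has_derivative (\<lambda>v. grad Q h x \<bullet> v)) (at x within Q)" by (rule hd[OF x])
    show "(grad Q h has_derivative (\<lambda>v. hess Q h x *v v)) (at x within Q)" by (rule gd[OF x])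
    show "\<bar>h x\<bar> \<le> S1 + S2 + S3" using u1[OF x] p2 p3 by linarith
    show "norm (grad Q h x) \<le> S1 + S2 + S3" using u2[OF x] p1 p3 by linarith
    show "onorm (\<lambda>v. hess Q h x *v v) \<le> S1 + S2 + S3" using u3[OF x] p1 p2 by linarith
  qed (rule Hc)
  fix x \<xi> :: "real^'k" assume x: "x \<in> unit_cube" and \<xi>: "norm \<xi> = 1"
  have xQ: "x \<in> Q" using x Q_def by simp
  have bb: "bdd_below ((\<lambda>x. \<bar>f x - g x\<bar> + norm (grad Q f x - grad Q g x) + \<bar>dd2 Q h \<xi> x\<bar>) ` Q)"
    by (rule bdd_belowI2[of _ 0]) auto
  have "C2_norm Q h / K \<le> \<bar>f x - g x\<bar> + norm (grad Q f x - grad Q g x) + \<bar>dd2 Q h \<xi> x\<bar>"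
    using nd3[OF \<xi>] cINF_lower[OF bb xQ] by linarith
  then show "C2_norm unit_cube (\<lambda>x. f x - g x) / K \<le> \<bar>f x - g x\<bar> + norm (grad unit_cube (\<lambda>x. f x - g x) x)
             + \<bar>(hess unit_cube (\<lambda>x. f x - g x) x *v \<xi>) \<bullet> \<xi>\<bar>"
    unfolding Q_def[symmetric] h_def[symmetric] dd2_def using gh[OF xQ] by simp
qed

lemma alg_trivial:
  fixes \<delta> lam s \<epsilon> M1 X :: real
  assumes d: "\<delta> > 0" "\<delta> \<le> lam" "lam \<le> 1" and s: "0 < s" "s \<le> 1" and e: "\<epsilon> > 0"
    and M1: "lam / \<delta> \<le> M1"
    and X: "X \<le> \<delta> powr (- (real m - 1 + s))"
  shows "X \<le> M1 * \<delta> powr (- \<epsilon>) * \<delta> powr (- (real m - 1)) / lam powr s"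
proof -
  have l0: "lam > 0" using d by linarith
  have q1: "lam / \<delta> \<ge> 1" using d by simp
  have "(lam / \<delta>) powr s \<le> (lam / \<delta>) powr 1" by (rule powr_mono[OF s(2) q1])
  also have "\<dots> \<le> M1" using M1 q1 by simp
  finally have qs: "(lam / \<delta>) powr s \<le> M1" .
  have e1: "\<delta> powr (- \<epsilon>) \<ge> 1"
  proof -
    have "\<delta> powr \<epsilon> \<le> 1" using d e by (intro powr_le1) auto
    moreover have "\<delta> powr \<epsilon> > 0" using d by simp
    ultimately have "1 \<le> 1 / \<delta> powr \<epsilon>" by simp
    then show ?thesis by (simp add: powr_minus_divide)
  qed
  have "\<delta> powr (- (real m - 1 + s)) = \<delta> powr (- (real m - 1)) * \<delta> powr (- s)"
    by (simp add: powr_add[symmetric])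
  also have "\<delta> powr (- s) = (lam / \<delta>) powr s / lam powr s"
  proof -
    have "lam powr s > 0" "\<delta> powr s > 0" using l0 d by auto
    then have "(lam / \<delta>) powr s / lam powr s = 1 / \<delta> powr s" by (simp add: powr_divide)
    then show ?thesis by (simp add: powr_minus_divide)
  qed
  finally have "X \<le> \<delta> powr (- (real m - 1)) * ((lam / \<delta>) powr s / lam powr s)" using X by simp
  also have "\<dots> \<le> \<delta> powr (- (real m - 1)) * (M1 / lam powr s)"
    using qs l0 by (intro mult_left_mono divide_right_mono) auto
  also have "\<dots> \<le> \<delta> powr (- (real m - 1)) * (M1 * \<delta> powr (- \<epsilon>) / lam powr s)"
  proof -
    have "M1 \<ge> 1" using M1 q1 by linarith
    then have "M1 \<le> M1 * \<delta> powr (- \<epsilon>)" using e1 by (simp add: mult_le_cancel_left1)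
    then show ?thesis using l0 by (intro mult_left_mono divide_right_mono) auto
  qed
  finally show ?thesis by (simp add: mult_ac)
qed

lemma alg_core:
  fixes N R E A Qm P B M2 X Rs :: real
  assumes "N * R \<le> M2" "E \<ge> 0" "A \<ge> 0" "B > 0" "P * Qm = 1" "Rs = P / B"
    and "X \<le> N * (E * (R * Rs) * (A * Qm))"
  shows "X \<le> M2 * E * A / B"
proof -
  have "N * (E * (R * Rs) * (A * Qm)) = (N * R) * (E * A * (P * Qm) / B)"
    using assms(6) by (simp add: mult_ac)
  also have "\<dots> = (N * R) * (E * A / B)" using assms(5) by simp
  also have "\<dots> \<le> M2 * (E * A / B)" using assms(1-4) by (intro mult_right_mono) auto
  finally show ?thesis using assms(7) by simp
qed

lemma alg_main:
  fixes \<delta> lam s \<epsilon> M2 N X r :: real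
  assumes d: "\<delta> > 0" "\<delta> \<le> lam" "lam \<le> 1" and s: "0 < s" "s \<le> 1" and m: "m \<ge> 1"
    and r: "r = \<delta> / lam"
    and N: "N * r ^ (m - 1) \<le> M2" "N \<ge> 0"
    and X: "X \<le> N * (\<delta> powr (- \<epsilon>) * r powr (real m - 1 + s) * \<delta> powr (- (real m - 1 + s)))"
  shows "X \<le> M2 * \<delta> powr (- \<epsilon>) * \<delta> powr (- (real m - 1)) / lam powr s"
proof (rule alg_core[OF N(1), where P="\<delta> powr s" and Qm="\<delta> powr (- s)" and Rs="r powr s"])
  have l0: "lam > 0" using d by linarith
  have r0: "r > 0" using d l0 r by simp
  have rm: "r powr (real m - 1 + s) = r ^ (m - 1) * r powr s"
  proof -
    have e: "real m - 1 + s = real (m - 1) + s" using m by simp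
    have "r powr (real (m - 1) + s) = r powr (real (m - 1)) * r powr s" by (rule powr_add)
    also have "r powr (real (m - 1)) = r ^ (m - 1)" by (rule powr_realpow[OF r0])
    finally show ?thesis unfolding e .
  qed
  have dm: "\<delta> powr (- (real m - 1 + s)) = \<delta> powr (- (real m - 1)) * \<delta> powr (- s)"
  proof -
    have "- (real m - 1 + s) = - (real m - 1) + - s" by simp
    then show ?thesis by (metis powr_add)
  qed
  show "0 \<le> \<delta> powr (- \<epsilon>)" "0 \<le> \<delta> powr (- (real m - 1))" by simp_all
  show "0 < lam powr s" using l0 by simp
  show "\<delta> powr s * \<delta> powr (- s) = 1" using d by (simp add: powr_minus)
  show "r powr s = \<delta> powr s / lam powr s" unfolding r by (rule powr_divide)
  show "X \<le> N * (\<delta> powr (- \<epsilon>) * (r ^ (m - 1) * r powr s) * (\<delta> powr (- (real m - 1)) * \<delta> powr (- s)))"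
    using X unfolding rm dm .
qed

theorem lemma3p1:
  fixes K D \<eta>0 :: real and \<alpha> :: "real \<Rightarrow> real"
  assumes "CARD('k::finite) \<ge> 2"
  shows "\<exists>C>0. \<forall>(F :: (real^'k \<Rightarrow> real) set) \<delta> f g \<epsilon> s (E :: (real^'k) set).
     cinematic unit_cube F K D \<alpha> \<eta>0 \<and> \<delta> > 0 \<and> f \<in> F \<and> g \<in> F \<and>
     \<delta> \<le> C2_norm unit_cube (\<lambda>x. f x - g x) \<and> C2_norm unit_cube (\<lambda>x. f x - g x) \<le> 1 \<and>
     \<epsilon> > 0 \<and> 0 < s \<and> s \<le> 1 \<and>
     finite E \<and> E \<subseteq> unit_cube \<and>
     delta_sigma_set \<delta> (real CARD('k) - 1 + s) (\<delta> powr (-\<epsilon>)) E \<and>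
     real (card E) \<le> \<delta> powr (-(real CARD('k) - 1 + s))
     \<longrightarrow> real (cov_num \<delta> (E \<inter> fst ` (fnbhd \<delta> f \<inter> fnbhd \<delta> g)))
         \<le> C * \<delta> powr (-\<epsilon>) * \<delta> powr (-(real CARD('k) - 1))
             / C2_norm unit_cube (\<lambda>x. f x - g x) powr s"
proof (cases "K > 0")
  case False
  show ?thesis by (rule exI[of _ 1]) (use False in \<open>auto simp: cinematic_def\<close>)
next
  case Kp: True
  obtain C0 where C0: "C0 > 0" and SL: "\<forall>(h :: real^'k \<Rightarrow> real) D H L t. L > 0 \<and> regf unit_cube h D H L \<and>
     (\<forall>x \<xi>. x \<in> unit_cube \<longrightarrow> norm \<xi> = 1 \<longrightarrow> L / K \<le> \<bar>h x\<bar> + norm (D x) + \<bar>(H x *v \<xi>) \<bullet> \<xi>\<bar>) \<and>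
     t > 0 \<and> t \<le> L / (1536 * K\<^sup>2) \<and> t \<le> L / (16 * K)
     \<longrightarrow> measure lebesgue {x \<in> unit_cube. \<bar>h x\<bar> \<le> t} \<le> C0 * (t / L)"
    using sublevel[OF assms Kp] by blast
  define m where "m = CARD('k)"
  have m1: "m \<ge> 1" unfolding m_def using assms by simp
  define c0 where "c0 = min (1/(1536*K\<^sup>2)) (1/(16*K))"
  have c0: "c0 > 0" unfolding c0_def using Kp by simp
  define M1 where "M1 = max 1 (3/c0)"
  define M2 where "M2 = 3 * C0 * (4 * real m) ^ m"
  define C where "C = M1 + M2"
  have M1: "M1 \<ge> 1" unfolding M1_def by simp
  have M2: "M2 > 0" unfolding M2_def using C0 m1 by simp
  show ?thesis
  proof (rule exI[of _ C], intro conjI allI impI)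
    show "C > 0" unfolding C_def using M1 M2 by simp
    fix F :: "(real^'k \<Rightarrow> real) set" and \<delta> f g \<epsilon> s and E :: "(real^'k) set"
    assume A: "cinematic unit_cube F K D \<alpha> \<eta>0 \<and> \<delta> > 0 \<and> f \<in> F \<and> g \<in> F \<and>
     \<delta> \<le> C2_norm unit_cube (\<lambda>x. f x - g x) \<and> C2_norm unit_cube (\<lambda>x. f x - g x) \<le> 1 \<and>
     \<epsilon> > 0 \<and> 0 < s \<and> s \<le> 1 \<and>
     finite E \<and> E \<subseteq> unit_cube \<and>
     delta_sigma_set \<delta> (real CARD('k) - 1 + s) (\<delta> powr (-\<epsilon>)) E \<and>
     real (card E) \<le> \<delta> powr (-(real CARD('k) - 1 + s))"
    define lam where "lam = C2_norm unit_cube (\<lambda>x. f x - g x)"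
    define h where "h = (\<lambda>x. f x - g x)"
    have cin: "cinematic unit_cube F K D \<alpha> \<eta>0" and d0: "\<delta> > 0" and fF: "f \<in> F" and gF: "g \<in> F"
      and dl: "\<delta> \<le> lam" and l1: "lam \<le> 1" and e0: "\<epsilon> > 0" and s: "0 < s" "s \<le> 1"
      and finE: "finite E" and EQ: "E \<subseteq> unit_cube"
      and dss: "delta_sigma_set \<delta> (real m - 1 + s) (\<delta> powr (-\<epsilon>)) E"
      and cardE: "real (card E) \<le> \<delta> powr (-(real m - 1 + s))"
      using A unfolding lam_def m_def by auto
    have reg: "regf unit_cube h (grad unit_cube h) (hess unit_cube h) lam"
      unfolding h_def lam_def by (rule cin_regf(1)[OF cin fF gF])
    have nd: "\<forall>x \<xi>. x \<in> unit_cube \<longrightarrow> norm \<xi> = 1 \<longrightarrow> lam / K \<le> \<bar>h x\<bar> + norm (grad unit_cube h x) + \<bar>(hess unit_cube h x *v \<xi>) \<bullet> \<xi>\<bar>"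
      unfolding h_def lam_def using cin_regf(2)[OF cin fF gF] by blast
    define A0 where "A0 = E \<inter> fst ` (fnbhd \<delta> f \<inter> fnbhd \<delta> g)"
    have finA0: "finite A0" unfolding A0_def using finE by simp
    have A0E: "A0 \<subseteq> E" unfolding A0_def by auto
    have PZ: "x \<in> unit_cube \<and> \<bar>h x\<bar> \<le> 2 * \<delta>" if xA: "x \<in> A0" for x
    proof -
      obtain y where "(x, y) \<in> fnbhd \<delta> f" "(x, y) \<in> fnbhd \<delta> g" using xA unfolding A0_def by force
      then have "x \<in> unit_cube" "\<bar>y - f x\<bar> \<le> \<delta>" "\<bar>y - g x\<bar> \<le> \<delta>" unfolding fnbhd_def by auto
      then show ?thesis unfolding h_def by linarith
    qed
    have l0: "lam > 0" using d0 dl by linarith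
    have Upos: "0 \<le> \<delta> powr (-\<epsilon>) * \<delta> powr (-(real m - 1)) / lam powr s" by simp
    have fin: "real (cov_num \<delta> A0) \<le> M1 * \<delta> powr (-\<epsilon>) * \<delta> powr (-(real m - 1)) / lam powr s
             \<or> real (cov_num \<delta> A0) \<le> M2 * \<delta> powr (-\<epsilon>) * \<delta> powr (-(real m - 1)) / lam powr s"
    proof (cases "3 * \<delta> \<le> c0 * lam")
      case False
      have "real (cov_num \<delta> A0) \<le> real (card A0)" using cov_le_card[OF finA0] d0 by simp
      also have "\<dots> \<le> real (card E)" using card_mono[OF finE A0E] by simp
      finally have X: "real (cov_num \<delta> A0) \<le> \<delta> powr (-(real m - 1 + s))" using cardE by linarith
      have "lam / \<delta> \<le> M1"
      proof -
        have "lam < 3 * \<delta> / c0" using False c0 by (simp add: field_simps)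
        then have "lam / \<delta> < 3 / c0" using d0 by (simp add: field_simps)
        then show ?thesis unfolding M1_def by simp
      qed
      then show ?thesis using alg_trivial[OF d0 dl l1 s e0 _ X] by blast
    next
      case True
      define r where "r = \<delta> / lam"
      have r0: "r > 0" and r1: "r \<le> 1" and dr: "\<delta> \<le> r" unfolding r_def using d0 dl l1 l0
        by (auto simp: field_simps intro: mult_left_le)
      have t1: "3 * \<delta> \<le> lam / (1536 * K\<^sup>2)" and t2: "3 * \<delta> \<le> lam / (16 * K)"
      proof -
        have "c0 * lam \<le> (1/(1536*K\<^sup>2)) * lam" "c0 * lam \<le> (1/(16*K)) * lam"
          unfolding c0_def using l0 by (intro mult_right_mono; simp)+
        then show "3 * \<delta> \<le> lam / (1536 * K\<^sup>2)" "3 * \<delta> \<le> lam / (16 * K)" using True by auto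
      qed
      define Z3 where "Z3 = {x \<in> unit_cube. \<bar>h x\<bar> \<le> 3 * \<delta>}"
      have muZ: "measure lebesgue Z3 \<le> C0 * (3 * \<delta> / lam)"
        unfolding Z3_def using SL l0 reg nd d0 t1 t2 by auto
      have hc: "continuous_on unit_cube h"
        using reg unfolding regf_def by (meson has_derivative_continuous_on)
      have Z3m: "Z3 \<in> lmeasurable" unfolding Z3_def
        by (rule lmeasurable_compact[OF closed_sublevel_compact(2)[OF unit_cube_props(2) hc]])
      obtain S where S: "S \<subseteq> A0" "\<forall>x\<in>S. \<forall>y\<in>S. x \<noteq> y \<longrightarrow> dist x y \<ge> r" "\<forall>a\<in>A0. \<exists>x\<in>S. dist a x < r"
        using max_separated[OF finA0 r0] by blast
      have finS: "finite S" using S(1) finA0 finite_subset by blast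
      have SQ: "S \<subseteq> unit_cube" using S(1) PZ by blast
      have pack: "real (card S) * (r / (4 * CARD('k))) ^ CARD('k) \<le> measure lebesgue Z3"
      proof (rule packing[OF finS SQ r0 r1 _ Z3m])
        show "dist x y \<ge> r" if "x \<in> S" "y \<in> S" "x \<noteq> y" for x y using S(2) that by blast
        show "cball x (r/4) \<inter> unit_cube \<subseteq> Z3" if x: "x \<in> S" for x
        proof
          fix y assume y: "y \<in> cball x (r/4) \<inter> unit_cube"
          have xQ: "x \<in> unit_cube" and hx: "\<bar>h x\<bar> \<le> 2 * \<delta>" using PZ x S(1) by auto
          have "\<bar>h y - h x\<bar> \<le> lam * norm (y - x)"
            by (rule regf_lip_h[OF reg unit_cube_props(1)]) (use y xQ in auto)
          also have "\<dots> \<le> lam * (r / 4)" using y l0 by (intro mult_left_mono) (auto simp: dist_norm norm_minus_commute)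
          also have "\<dots> = \<delta> / 4" unfolding r_def using l0 by simp
          finally have "\<bar>h y - h x\<bar> \<le> \<delta> / 4" .
          then have "\<bar>h y\<bar> \<le> 3 * \<delta>" using hx d0 by linarith
          then show "y \<in> Z3" unfolding Z3_def using y by auto
        qed
      qed
      have NS: "real (card S) * r ^ (m - 1) \<le> M2"
      proof -
        have "real (card S) * (r / (4 * real m)) ^ m \<le> C0 * (3 * \<delta> / lam)"
        proof -
          have "real (4 * CARD('k)) = 4 * real m" unfolding m_def by simp
          then show ?thesis using pack muZ unfolding m_def by simp
        qed
        also have "\<dots> = r * (3 * C0)" unfolding r_def by simp
        finally have a: "real (card S) * (r / (4 * real m)) ^ m \<le> r * (3 * C0)" .
        have "(r / (4 * real m)) ^ m = r * r ^ (m - 1) / (4 * real m) ^ m"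
        proof -
          have "m = Suc (m - 1)" using m1 by simp
          then have "r ^ m = r * r ^ (m - 1)" by (metis power_Suc)
          then show ?thesis by (simp add: power_divide)
        qed
        then have "r * (real (card S) * r ^ (m - 1)) \<le> r * (3 * C0 * (4 * real m) ^ m)"
          using a m1 by (simp add: field_simps)
        then show ?thesis unfolding M2_def using r0 by simp
      qed
      define Y where "Y = \<delta> powr (-\<epsilon>) * r powr (real m - 1 + s) * \<delta> powr (-(real m - 1 + s))"
      have each: "real (cov_num \<delta> (E \<inter> ball x r)) \<le> Y" for x
      proof -
        have "real (cov_num \<delta> (E \<inter> ball x r)) \<le> \<delta> powr (-\<epsilon>) * r powr (real m - 1 + s) * real (cov_num \<delta> E)"
          using dss dr unfolding delta_sigma_set_def by blast
        also have "\<dots> \<le> \<delta> powr (-\<epsilon>) * r powr (real m - 1 + s) * \<delta> powr (-(real m - 1 + s))"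
        proof (rule mult_left_mono)
          have "real (cov_num \<delta> E) \<le> real (card E)" using cov_le_card[OF finE] d0 by simp
          then show "real (cov_num \<delta> E) \<le> \<delta> powr (-(real m - 1 + s))" using cardE by linarith
        qed simp
        finally show ?thesis unfolding Y_def .
      qed
      have "cov_num \<delta> A0 \<le> (\<Sum>x\<in>S. cov_num \<delta> (E \<inter> ball x r))"
      proof (rule cov_union[OF finS _ _])
        show "finite (E \<inter> ball x r)" for x using finE by simp
        show "\<delta> \<ge> 0" using d0 by simp
        show "A0 \<subseteq> (\<Union>x\<in>S. E \<inter> ball x r)"
        proof
          fix a assume a: "a \<in> A0"
          then obtain x where "x \<in> S" "dist a x < r" using S(3) by blast
          then show "a \<in> (\<Union>x\<in>S. E \<inter> ball x r)" using a A0E by (auto simp: dist_commute)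
        qed
      qed
      then have "real (cov_num \<delta> A0) \<le> (\<Sum>x\<in>S. real (cov_num \<delta> (E \<inter> ball x r)))"
        by (metis of_nat_le_iff of_nat_sum)
      also have "\<dots> \<le> (\<Sum>x\<in>S. Y)" by (intro sum_mono each)
      also have "\<dots> = real (card S) * Y" by simp
      finally have X: "real (cov_num \<delta> A0) \<le> real (card S) * Y" .
      have "real (cov_num \<delta> A0) \<le> M2 * \<delta> powr (-\<epsilon>) * \<delta> powr (-(real m - 1)) / lam powr s"
        by (rule alg_main[OF d0 dl l1 s m1 r_def NS _ X[unfolded Y_def]]) simp
      then show ?thesis by blast
    qed
    have le1: "M1 * \<delta> powr (-\<epsilon>) * \<delta> powr (-(real m - 1)) / lam powr s \<le> C * \<delta> powr (-\<epsilon>) * \<delta> powr (-(real m - 1)) / lam powr s"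
      unfolding C_def using M2 by (intro divide_right_mono mult_right_mono) auto
    have le2: "M2 * \<delta> powr (-\<epsilon>) * \<delta> powr (-(real m - 1)) / lam powr s \<le> C * \<delta> powr (-\<epsilon>) * \<delta> powr (-(real m - 1)) / lam powr s"
      unfolding C_def using M1 by (intro divide_right_mono mult_right_mono) auto
    show "real (cov_num \<delta> (E \<inter> fst ` (fnbhd \<delta> f \<inter> fnbhd \<delta> g)))
         \<le> C * \<delta> powr (-\<epsilon>) * \<delta> powr (-(real CARD('k) - 1))
             / C2_norm unit_cube (\<lambda>x. f x - g x) powr s"
      using fin le1 le2 unfolding A0_def[symmetric] lam_def[symmetric] m_def[symmetric] by linarith
  qed
qed

end
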